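(* Let $\mathcal{LS}_{\mathfrak{A}_2}\langle X\rangle$ be the free algebra over a field of characteristic $0$ in the variety of left-symmetric algebras satisfying $a(bc)+b(ac)+a(cb)+c(ab)+b(ca)+c(ba)=0$, and equip it with the commutator $[a,b]=ab-ba$. Then every polynomial identity of degree at most $4$ satisfied by $(\mathcal{LS}_{\mathfrak{A}_2}\langle X\rangle,[\cdot,\cdot])$ is a consequence of anticommutativity and the Jacobi identity.
   Context: A left-symmetric algebra is an algebra with $(a,b,c)=(b,a,c)$, where $(a,b,c)=(ab)c-a(bc)$. *)

theory Defs
  imports Main "HOL-Library.Poly_Mapping"
begin

datatype nmon = X nat | M nmon nmon

fun mdeg :: "nmon \<Rightarrow> nat" where
  "mdeg (X i) = 1"
| "mdeg (M a b) = mdeg a + mdeg b"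

type_synonym 'k napoly = "nmon \<Rightarrow>\<^sub>0 'k"

definition nsmult :: "'k::field \<Rightarrow> 'k napoly \<Rightarrow> 'k napoly" where
  "nsmult c p = Poly_Mapping.map (\<lambda>a. c * a) p"

definition nvar :: "nat \<Rightarrow> 'k::field napoly" where
  "nvar i = Poly_Mapping.single (X i) 1"

definition nmult :: "'k::field napoly \<Rightarrow> 'k napoly \<Rightarrow> 'k napoly" where
  "nmult p q = (\<Sum>s\<in>Poly_Mapping.keys p. \<Sum>t\<in>Poly_Mapping.keys q.
                  Poly_Mapping.single (M s t) (Poly_Mapping.lookup p s * Poly_Mapping.lookup q t))"

definition ncomm :: "'k::field napoly \<Rightarrow> 'k napoly \<Rightarrow> 'k napoly" where
  "ncomm p q = nmult p q - nmult q p"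

fun mon_eval :: "('k napoly \<Rightarrow> 'k napoly \<Rightarrow> 'k napoly) \<Rightarrow> (nat \<Rightarrow> 'k napoly) \<Rightarrow> nmon \<Rightarrow> 'k::field napoly" where
  "mon_eval \<mu> \<sigma> (X i) = \<sigma> i"
| "mon_eval \<mu> \<sigma> (M a b) = \<mu> (mon_eval \<mu> \<sigma> a) (mon_eval \<mu> \<sigma> b)"

definition poly_eval :: "('k napoly \<Rightarrow> 'k napoly \<Rightarrow> 'k napoly) \<Rightarrow> (nat \<Rightarrow> 'k napoly) \<Rightarrow> 'k napoly \<Rightarrow> 'k::field napoly" where
  "poly_eval \<mu> \<sigma> f = (\<Sum>t\<in>Poly_Mapping.keys f. nsmult (Poly_Mapping.lookup f t) (mon_eval \<mu> \<sigma> t))"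

abbreviation subst :: "(nat \<Rightarrow> 'k napoly) \<Rightarrow> 'k napoly \<Rightarrow> 'k::field napoly" where
  "subst \<sigma> f \<equiv> poly_eval nmult \<sigma> f"

text \<open>The T-ideal of k{X} generated by a set S of polynomials: the smallest
  two-sided ideal containing all substitution instances of elements of S.
  f is a consequence of the identities S iff f lies in this T-ideal.\<close>
inductive_set Tideal :: "'k::field napoly set \<Rightarrow> 'k napoly set" for S where
  gen: "s \<in> S \<Longrightarrow> subst \<sigma> s \<in> Tideal S"
| zero: "0 \<in> Tideal S"
| add: "p \<in> Tideal S \<Longrightarrow> q \<in> Tideal S \<Longrightarrow> p + q \<in> Tideal S"
| smult: "p \<in> Tideal S \<Longrightarrow> nsmult c p \<in> Tideal S"
| multl: "p \<in> Tideal S \<Longrightarrow> nmult q p \<in> Tideal S"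
| multr: "p \<in> Tideal S \<Longrightarrow> nmult p q \<in> Tideal S"

abbreviation x0 where "x0 \<equiv> nvar 0"
abbreviation x1 where "x1 \<equiv> nvar 1"
abbreviation x2 where "x2 \<equiv> nvar 2"

definition nassoc :: "'k::field napoly \<Rightarrow> 'k napoly \<Rightarrow> 'k napoly \<Rightarrow> 'k napoly" where
  "nassoc a b c = nmult (nmult a b) c - nmult a (nmult b c)"

definition LS_A2_ids :: "'k::field napoly set" where
  "LS_A2_ids = {nassoc x0 x1 x2 - nassoc x1 x0 x2,
     nmult x0 (nmult x1 x2) + nmult x1 (nmult x0 x2) + nmult x0 (nmult x2 x1)
     + nmult x2 (nmult x0 x1) + nmult x1 (nmult x2 x0) + nmult x2 (nmult x1 x0)}"

definition Lie_ids :: "'k::field napoly set" where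
  "Lie_ids = {nmult x0 x1 + nmult x1 x0,
     nmult (nmult x0 x1) x2 + nmult (nmult x1 x2) x0 + nmult (nmult x2 x0) x1}"

text \<open>The free LS_{A_2} algebra is k{X} / Tideal LS_A2_ids.  A polynomial f
  is an identity of (LS_{A_2}<X>, [.,.]) iff for all elements
  \<sigma> i + Tideal LS_A2_ids of the free algebra, evaluating f with the product
  read as the commutator gives 0, i.e. the evaluation lies in the T-ideal.\<close>
definition is_comm_identity_of_free_LSA2 :: "'k::field napoly \<Rightarrow> bool" where
  "is_comm_identity_of_free_LSA2 f \<longleftrightarrow>
     (\<forall>\<sigma>. poly_eval ncomm \<sigma> f \<in> Tideal LS_A2_ids)"

end

theory Submission
  imports Defs
begin

section \<open>Scalar multiplication\<close>

lemma lookup_nsmult [simp]: "Poly_Mapping.lookup (nsmult c p) t = c * Poly_Mapping.lookup p t"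
  unfolding nsmult_def by (simp add: map.rep_eq when_def)

lemma nsmult_add_right: "nsmult c (p + q) = nsmult c p + nsmult c q"
  by (rule poly_mapping_eqI) (simp add: lookup_add algebra_simps)

lemma nsmult_add_left: "nsmult (a + b) p = nsmult a p + nsmult b p"
  by (rule poly_mapping_eqI) (simp add: lookup_add algebra_simps)

lemma nsmult_zero_left [simp]: "nsmult 0 p = 0"
  by (rule poly_mapping_eqI) simp

lemma nsmult_zero_right [simp]: "nsmult c 0 = 0"
  by (rule poly_mapping_eqI) simp

lemma nsmult_one [simp]: "nsmult 1 p = p"
  by (rule poly_mapping_eqI) simp

lemma nsmult_nsmult [simp]: "nsmult a (nsmult b p) = nsmult (a * b) p"
  by (rule poly_mapping_eqI) (simp add: algebra_simps)

lemma nsmult_minus_one: "nsmult (-1) p = - p"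
  by (rule poly_mapping_eqI) simp

lemma nsmult_uminus_right: "nsmult c (- p) = - nsmult c p"
  by (rule poly_mapping_eqI) simp

lemma nsmult_diff_right: "nsmult c (p - q) = nsmult c p - nsmult c q"
  by (rule poly_mapping_eqI) (simp add: lookup_minus algebra_simps)

lemma nsmult_single [simp]: "nsmult c (Poly_Mapping.single t d) = Poly_Mapping.single t (c * d)"
  by (rule poly_mapping_eqI) (simp add: lookup_single when_def)

lemma nsmult_sum: "nsmult c (sum f A) = (\<Sum>x\<in>A. nsmult c (f x))"
  by (induction A rule: infinite_finite_induct) (simp_all add: nsmult_add_right)

section \<open>Linear extension\<close>

definition lin_ext :: "(nmon \<Rightarrow> 'k napoly) \<Rightarrow> 'k napoly \<Rightarrow> 'k::field napoly" where
  "lin_ext g p = (\<Sum>t\<in>Poly_Mapping.keys p. nsmult (Poly_Mapping.lookup p t) (g t))"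

lemma lin_ext_superset:
  assumes "finite A" "Poly_Mapping.keys p \<subseteq> A"
  shows "lin_ext g p = (\<Sum>t\<in>A. nsmult (Poly_Mapping.lookup p t) (g t))"
  unfolding lin_ext_def
  by (rule sum.mono_neutral_left) (use assms in \<open>auto simp: in_keys_iff\<close>)

lemma lin_ext_add: "lin_ext g (p + q) = lin_ext g p + lin_ext g q"
proof -
  let ?A = "Poly_Mapping.keys p \<union> Poly_Mapping.keys q"
  have "lin_ext g (p + q) = (\<Sum>t\<in>?A. nsmult (Poly_Mapping.lookup (p + q) t) (g t))"
    by (rule lin_ext_superset) (auto simp: keys_add)
  also have "\<dots> = (\<Sum>t\<in>?A. nsmult (Poly_Mapping.lookup p t) (g t)) + (\<Sum>t\<in>?A. nsmult (Poly_Mapping.lookup q t) (g t))"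
    by (simp add: lookup_add nsmult_add_left sum.distrib)
  also have "\<dots> = lin_ext g p + lin_ext g q"
    by (simp add: lin_ext_superset[symmetric])
  finally show ?thesis .
qed

lemma lin_ext_nsmult: "lin_ext g (nsmult c p) = nsmult c (lin_ext g p)"
proof -
  have "lin_ext g (nsmult c p) = (\<Sum>t\<in>Poly_Mapping.keys p. nsmult (Poly_Mapping.lookup (nsmult c p) t) (g t))"
    by (rule lin_ext_superset) (auto simp: in_keys_iff)
  also have "\<dots> = nsmult c (lin_ext g p)"
    by (simp add: lin_ext_def nsmult_sum)
  finally show ?thesis .
qed

lemma lin_ext_zero [simp]: "lin_ext g 0 = 0"
  by (simp add: lin_ext_def)

lemma lin_ext_single [simp]: "lin_ext g (Poly_Mapping.single t c) = nsmult c (g t)"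
proof -
  have "lin_ext g (Poly_Mapping.single t c) = (\<Sum>s\<in>{t}. nsmult (Poly_Mapping.lookup (Poly_Mapping.single t c) s) (g s))"
    by (rule lin_ext_superset) auto
  then show ?thesis by simp
qed

lemma lin_ext_uminus: "lin_ext g (- p) = - lin_ext g p"
  by (metis lin_ext_nsmult nsmult_minus_one)

lemma lin_ext_diff: "lin_ext g (p - q) = lin_ext g p - lin_ext g q"
  by (metis diff_conv_add_uminus lin_ext_add lin_ext_uminus)

lemma lin_ext_fun_add: "lin_ext (\<lambda>t. g t + h t) p = lin_ext g p + lin_ext h p"
  by (simp add: lin_ext_def nsmult_add_right sum.distrib)

lemma lin_ext_fun_diff: "lin_ext (\<lambda>t. g t - h t) p = lin_ext g p - lin_ext h p"
  by (simp add: lin_ext_def nsmult_diff_right sum_subtractf)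

lemma lin_ext_fun_nsmult: "lin_ext (\<lambda>t. nsmult c (g t)) p = nsmult c (lin_ext g p)"
  by (simp add: lin_ext_def nsmult_sum mult.commute)

lemma lin_ext_fun_cong: "(\<And>t. t \<in> Poly_Mapping.keys p \<Longrightarrow> g t = h t) \<Longrightarrow> lin_ext g p = lin_ext h p"
  by (simp add: lin_ext_def)

lemma lin_ext_id: "lin_ext (\<lambda>t. Poly_Mapping.single t 1) p = p"
proof (rule poly_mapping_eqI)
  fix k
  have "Poly_Mapping.lookup (lin_ext (\<lambda>t. Poly_Mapping.single t 1) p) k
      = (\<Sum>t\<in>Poly_Mapping.keys p. if t = k then Poly_Mapping.lookup p t else 0)"
    unfolding lin_ext_def lookup_sum by (intro sum.cong) (auto simp: lookup_single when_def)
  also have "\<dots> = (if k \<in> Poly_Mapping.keys p then Poly_Mapping.lookup p k else 0)"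
    by (rule sum.delta) simp
  also have "\<dots> = Poly_Mapping.lookup p k"
    by (simp add: not_in_keys_iff_lookup_eq_zero)
  finally show "Poly_Mapping.lookup (lin_ext (\<lambda>t. Poly_Mapping.single t 1) p) k = Poly_Mapping.lookup p k" .
qed

definition linmap :: "('k::field napoly \<Rightarrow> 'k napoly) \<Rightarrow> bool" where
  "linmap \<Phi> \<longleftrightarrow> (\<forall>p q. \<Phi> (p + q) = \<Phi> p + \<Phi> q) \<and> (\<forall>c p. \<Phi> (nsmult c p) = nsmult c (\<Phi> p))"

lemma linmap_zero: "linmap \<Phi> \<Longrightarrow> \<Phi> 0 = 0"
proof -
  assume a: "linmap \<Phi>"
  have "\<Phi> (nsmult 0 0) = nsmult 0 (\<Phi> 0)" using a unfolding linmap_def by blast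
  then show ?thesis by simp
qed

lemma linmap_sum: "linmap \<Phi> \<Longrightarrow> \<Phi> (sum f A) = (\<Sum>x\<in>A. \<Phi> (f x))"
proof (induction A rule: infinite_finite_induct)
  case (infinite A)
  then show ?case by (simp add: linmap_zero)
next
  case empty
  then show ?case by (simp add: linmap_zero)
next
  case (insert x F)
  then show ?case unfolding linmap_def by simp
qed

lemma linmap_lin_ext: "linmap \<Phi> \<Longrightarrow> \<Phi> (lin_ext g p) = lin_ext (\<lambda>t. \<Phi> (g t)) p"
  unfolding lin_ext_def by (simp add: linmap_sum) (simp add: linmap_def)

lemma linmap_lin_ext_op: "linmap (lin_ext g)"
  by (simp add: linmap_def lin_ext_add lin_ext_nsmult)

lemma subspace_sum:
  assumes "0 \<in> H" "\<And>p q. p \<in> H \<Longrightarrow> q \<in> H \<Longrightarrow> p + q \<in> H"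
  shows "finite B \<Longrightarrow> (\<And>t. t \<in> B \<Longrightarrow> h t \<in> H) \<Longrightarrow> sum h B \<in> H"
proof (induction B rule: finite_induct)
  case empty
  then show ?case using assms(1) by simp
next
  case (insert x F)
  have "h x \<in> H" using insert.prems by simp
  moreover have "sum h F \<in> H" using insert.IH insert.prems by simp
  ultimately show ?case using insert.hyps assms(2) by simp
qed

lemma subspace_lin_ext:
  assumes "0 \<in> H" "\<And>p q. p \<in> H \<Longrightarrow> q \<in> H \<Longrightarrow> p + q \<in> H" "\<And>c p. p \<in> H \<Longrightarrow> nsmult c p \<in> H"
    and "\<And>t. t \<in> Poly_Mapping.keys p \<Longrightarrow> g t \<in> H"
  shows "lin_ext g p \<in> H"
  unfolding lin_ext_def
  by (rule subspace_sum[OF assms(1,2)]) (simp_all add: assms(3,4))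

section \<open>Multiplication\<close>

lemma nmult_lin_ext: "nmult p q = lin_ext (\<lambda>s. lin_ext (\<lambda>t. Poly_Mapping.single (M s t) 1) q) p"
  unfolding nmult_def lin_ext_def by (simp add: nsmult_sum)

lemma linmap_nmult_left: "linmap (\<lambda>p. nmult p q)"
  unfolding nmult_lin_ext by (rule linmap_lin_ext_op)

lemma linmap_nmult_right: "linmap (\<lambda>q. nmult p q)"
  unfolding nmult_lin_ext linmap_def
  by (simp add: lin_ext_add lin_ext_nsmult lin_ext_fun_add lin_ext_fun_nsmult)

lemma nmult_add_left: "nmult (p + p') q = nmult p q + nmult p' q"
  using linmap_nmult_left unfolding linmap_def by blast
lemma nmult_add_right: "nmult p (q + q') = nmult p q + nmult p q'"
  using linmap_nmult_right unfolding linmap_def by blast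
lemma nmult_nsmult_left: "nmult (nsmult c p) q = nsmult c (nmult p q)"
  using linmap_nmult_left unfolding linmap_def by blast
lemma nmult_nsmult_right: "nmult p (nsmult c q) = nsmult c (nmult p q)"
  using linmap_nmult_right unfolding linmap_def by blast
lemma nmult_zero_left [simp]: "nmult 0 q = 0"
  by (simp add: nmult_def)
lemma nmult_zero_right [simp]: "nmult p 0 = 0"
  by (simp add: nmult_def)
lemma nmult_uminus_left: "nmult (- p) q = - nmult p q"
  by (metis nmult_nsmult_left nsmult_minus_one)
lemma nmult_uminus_right: "nmult p (- q) = - nmult p q"
  by (metis nmult_nsmult_right nsmult_minus_one)
lemma nmult_diff_left: "nmult (p - p') q = nmult p q - nmult p' q"
  using nmult_add_left[of p "- p'" q] by (simp add: nmult_uminus_left)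
lemma nmult_diff_right: "nmult p (q - q') = nmult p q - nmult p q'"
  using nmult_add_right[of p q "- q'"] by (simp add: nmult_uminus_right)

lemma nmult_single_single [simp]:
  "nmult (Poly_Mapping.single a c) (Poly_Mapping.single b d) = Poly_Mapping.single (M a b) (c * d)"
  unfolding nmult_lin_ext lin_ext_single nsmult_single by simp

lemmas nmult_simps = nmult_add_left nmult_add_right nmult_nsmult_left nmult_nsmult_right
  nmult_uminus_left nmult_uminus_right nmult_diff_left nmult_diff_right

fun ren :: "(nat \<Rightarrow> nat) \<Rightarrow> nmon \<Rightarrow> nmon" where
  "ren r (X i) = X (r i)"
| "ren r (M a b) = M (ren r a) (ren r b)"

lemma ren_ren [simp]: "ren r' (ren r m) = ren (r' \<circ> r) m"
  by (induction m) auto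

lemma ren_id [simp]: "ren id m = m"
  by (induction m) auto

lemma mdeg_ren [simp]: "mdeg (ren r m) = mdeg m"
  by (induction m) auto

lemma mdeg_pos: "mdeg m \<ge> 1"
  by (induction m) auto

type_synonym ilist = "(nmon \<times> int) list"

fun tp :: "(nat \<Rightarrow> nat) \<Rightarrow> ilist \<Rightarrow> 'k::field napoly" where
  "tp r [] = 0"
| "tp r ((m, c) # xs) = Poly_Mapping.single (ren r m) (of_int c) + tp r xs"

definition renl :: "(nat \<Rightarrow> nat) \<Rightarrow> ilist \<Rightarrow> ilist" where
  "renl r xs = map (\<lambda>(m, c). (ren r m, c)) xs"

definition lscale :: "int \<Rightarrow> ilist \<Rightarrow> ilist" where
  "lscale k xs = map (\<lambda>(m, c). (m, k * c)) xs"

definition lmul :: "ilist \<Rightarrow> ilist \<Rightarrow> ilist" where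
  "lmul xs ys = concat (map (\<lambda>(a, c). map (\<lambda>(b, d). (M a b, c * d)) ys) xs)"

lemma tp_Cons' [simp]: "tp r (a # xs) = Poly_Mapping.single (ren r (fst a)) (of_int (snd a)) + tp r xs"
  by (cases a) simp

declare tp.simps(2) [simp del]

lemma tp_append [simp]: "tp r (xs @ ys) = tp r xs + tp r ys"
  by (induction xs) (auto simp: add.assoc)

lemma tp_renl: "tp r' (renl r xs) = tp (r' \<circ> r) xs"
  by (induction xs) (auto simp: renl_def case_prod_beta comp_def)

lemma tp_renl_id: "tp id (renl r xs) = tp r xs"
  by (simp add: tp_renl)

lemma tp_lscale: "tp r (lscale k xs) = nsmult (of_int k) (tp r xs)"
  by (induction xs) (auto simp: lscale_def nsmult_add_right case_prod_beta)

lemma tp_single_mul: "tp r (map (\<lambda>(b, d). (M a b, c * d)) ys) = nmult (Poly_Mapping.single (ren r a) (of_int c)) (tp r ys)"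
  by (induction ys) (auto simp: nmult_add_right case_prod_beta)

lemma tp_lmul: "tp r (lmul xs ys) = nmult (tp r xs) (tp r ys)"
  by (induction xs) (auto simp: lmul_def tp_single_mul nmult_add_left case_prod_beta)

lemma renl_append [simp]: "renl r (xs @ ys) = renl r xs @ renl r ys"
  by (simp add: renl_def)

lemma renl_lscale: "renl r (lscale k xs) = lscale k (renl r xs)"
  by (simp add: renl_def lscale_def case_prod_beta)

lemma renl_lmul: "renl r (lmul xs ys) = lmul (renl r xs) (renl r ys)"
  by (simp add: renl_def lmul_def map_concat case_prod_beta comp_def)

lemma renl_Cons [simp]: "renl r (a # xs) = (ren r (fst a), snd a) # renl r xs"
  by (simp add: renl_def case_prod_beta)

lemma renl_Nil [simp]: "renl r [] = []"
  by (simp add: renl_def)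

fun ceval_l :: "nmon \<Rightarrow> ilist" where
  "ceval_l (X i) = [(X i, 1)]"
| "ceval_l (M a b) = lmul (ceval_l a) (ceval_l b) @ lscale (-1) (lmul (ceval_l b) (ceval_l a))"

lemma nvar_tp: "nvar i = tp id [(X i, 1)]"
  by (simp add: nvar_def)

lemma ceval_l_correct: "mon_eval ncomm nvar t = (tp id (ceval_l t) :: 'k::field napoly)"
proof (induction t)
  case (X i)
  then show ?case by (simp add: nvar_def)
next
  case (M a b)
  then show ?case
    by (simp add: ncomm_def tp_lmul tp_lscale nsmult_minus_one)
qed

lemma ceval_l_ren: "ceval_l (ren r t) = renl r (ceval_l t)"
  by (induction t) (auto simp: renl_lmul renl_lscale)

fun ctx_l :: "(bool \<times> nmon) list \<Rightarrow> ilist \<Rightarrow> ilist" where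
  "ctx_l [] xs = xs"
| "ctx_l ((b, m) # C) xs = ctx_l C (if b then lmul [(m, 1)] xs else lmul xs [(m, 1)])"

fun ctxP :: "(bool \<times> nmon) list \<Rightarrow> 'k napoly \<Rightarrow> 'k::field napoly" where
  "ctxP [] p = p"
| "ctxP ((b, m) # C) p = ctxP C (if b then nmult (Poly_Mapping.single m 1) p else nmult p (Poly_Mapping.single m 1))"

lemma ctx_l_Cons' [simp]: "ctx_l (a # C) xs = ctx_l C (if fst a then lmul [(snd a, 1)] xs else lmul xs [(snd a, 1)])"
  by (cases a) simp

lemma ctxP_Cons' [simp]: "ctxP (a # C) p = ctxP C (if fst a then nmult (Poly_Mapping.single (snd a) 1) p else nmult p (Poly_Mapping.single (snd a) 1))"
  by (cases a) simp

declare ctx_l.simps(2) [simp del] ctxP.simps(2) [simp del]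

lemma tp_ctx_l: "tp id (ctx_l C xs) = ctxP C (tp id xs)"
  by (induction C arbitrary: xs) (auto simp: tp_lmul)

lemma ctx_l_ren: "renl r (ctx_l C xs) = ctx_l (map (\<lambda>(b, m). (b, ren r m)) C) (renl r xs)"
  by (induction C arbitrary: xs) (auto simp: renl_lmul case_prod_beta)

lemma linmap_ctxP: "linmap (ctxP C)"
proof (induction C)
  case Nil
  then show ?case by (simp add: linmap_def)
next
  case (Cons a C)
  obtain b m where a: "a = (b, m)" by fastforce
  show ?case using Cons unfolding a linmap_def
    by (auto simp: nmult_add_left nmult_add_right nmult_nsmult_left nmult_nsmult_right)
qed

definition coeff :: "ilist \<Rightarrow> nmon \<Rightarrow> int" where
  "coeff xs m = sum_list (map snd (filter (\<lambda>p. fst p = m) xs))"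

definition eqc :: "ilist \<Rightarrow> ilist \<Rightarrow> bool" where
  "eqc xs ys = list_all (\<lambda>m. coeff xs m = coeff ys m) (map fst (xs @ ys))"

lemma tp_coeff:
  assumes "finite A" "fst ` set xs \<subseteq> A"
  shows "tp r xs = (\<Sum>m\<in>A. Poly_Mapping.single (ren r m) (of_int (coeff xs m)) :: 'k::field napoly)"
  using assms(2)
proof (induction xs)
  case Nil
  then show ?case by (simp add: coeff_def)
next
  case (Cons a xs)
  obtain m0 c where a: "a = (m0, c)" by fastforce
  have m0: "m0 \<in> A" using Cons.prems a by auto
  have IH: "tp r xs = (\<Sum>m\<in>A. Poly_Mapping.single (ren r m) (of_int (coeff xs m)) :: 'k napoly)"
    using Cons by auto
  have cf: "coeff (a # xs) m = (if m0 = m then c else 0) + coeff xs m" for m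
    by (simp add: coeff_def a)
  have "(\<Sum>m\<in>A. Poly_Mapping.single (ren r m) (of_int (coeff (a # xs) m)) :: 'k napoly)
     = (\<Sum>m\<in>A. (if m0 = m then Poly_Mapping.single (ren r m) (of_int c) else 0))
       + (\<Sum>m\<in>A. Poly_Mapping.single (ren r m) (of_int (coeff xs m)))"
    unfolding cf by (simp add: single_add sum.distrib[symmetric] of_int_add) (intro sum.cong, auto)
  also have "\<dots> = Poly_Mapping.single (ren r m0) (of_int c) + tp r xs"
    using m0 assms(1) by (simp add: IH sum.delta)
  finally show ?case by (simp add: a)
qed

lemma eqc_sound:
  assumes "eqc xs ys"
  shows "tp r xs = (tp r ys :: 'k::field napoly)"
proof -
  let ?A = "fst ` set (xs @ ys)"
  have h: "\<And>m. m \<in> ?A \<Longrightarrow> coeff xs m = coeff ys m"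
    using assms unfolding eqc_def list_all_iff by (metis list.set_map)
  have "(\<Sum>m\<in>?A. Poly_Mapping.single (ren r m) (of_int (coeff xs m)) :: 'k napoly)
      = (\<Sum>m\<in>?A. Poly_Mapping.single (ren r m) (of_int (coeff ys m)))"
    using h by (intro sum.cong) simp_all
  moreover have "tp r xs = (\<Sum>m\<in>?A. Poly_Mapping.single (ren r m) (of_int (coeff xs m)) :: 'k napoly)"
    by (rule tp_coeff) auto
  moreover have "tp r ys = (\<Sum>m\<in>?A. Poly_Mapping.single (ren r m) (of_int (coeff ys m)) :: 'k napoly)"
    by (rule tp_coeff) auto
  ultimately show ?thesis by simp
qed


fun ins :: "nmon \<times> int \<Rightarrow> ilist \<Rightarrow> ilist" where
  "ins p [] = (if snd p = 0 then [] else [p])"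
| "ins p (q # qs) = (if fst p = fst q then (if snd p + snd q = 0 then qs else (fst q, snd p + snd q) # qs)
     else q # ins p qs)"

fun normL :: "ilist \<Rightarrow> ilist" where
  "normL [] = []"
| "normL (x # xs) = ins x (normL xs)"

lemma tp_ins: "tp r (ins p qs) = (tp r (p # qs) :: 'k::field napoly)"
proof (induction qs)
  case Nil
  then show ?case by simp
next
  case (Cons q qs)
  show ?case
  proof (cases "fst p = fst q")
    case True
    show ?thesis
    proof (cases "snd p + snd q = 0")
      case True
      then have "of_int (snd p) + of_int (snd q) = (0 :: 'k)"
        by (metis of_int_0 of_int_add)
      then have "Poly_Mapping.single (ren r (fst p)) (of_int (snd p)) + Poly_Mapping.single (ren r (fst q)) (of_int (snd q)) = (0 :: 'k napoly)"
        using \<open>fst p = fst q\<close> by (simp add: single_add[symmetric])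
      then show ?thesis using True \<open>fst p = fst q\<close> by (simp add: add.assoc[symmetric])
    next
      case False
      then show ?thesis using \<open>fst p = fst q\<close>
        by (simp add: single_add of_int_add add.assoc)
    qed
  next
    case False
    then show ?thesis using Cons by (simp add: add_ac)
  qed
qed

lemma tp_norm: "tp r (normL xs) = (tp r xs :: 'k::field napoly)"
  by (induction xs) (simp_all add: tp_ins)

definition eqn :: "ilist \<Rightarrow> ilist \<Rightarrow> bool" where
  "eqn xs ys = (normL (xs @ lscale (-1) ys) = [])"

lemma eqn_sound:
  assumes "eqn xs ys"
  shows "tp r xs = (tp r ys :: 'k::field napoly)"
proof -
  have "tp r (xs @ lscale (-1) ys) = (0 :: 'k napoly)"
    using assms tp_norm[of r "xs @ lscale (-1) ys"] by (simp add: eqn_def)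
  then show ?thesis by (simp add: tp_lscale nsmult_minus_one)
qed

fun PsiG :: "nmon \<Rightarrow> ilist" where
  "PsiG (X a) = [(X a, 12)]"
| "PsiG (M (X a) (X b)) = [(M (X a) (X b), 6)]"
| "PsiG (M (X a) (M (X b) (X c))) = [(M (M (X a) (X b)) (X c), 4)]"
| "PsiG (M (M (X a) (X b)) (X c)) = [(M (M (X a) (X b)) (X c), 4)]"
| "PsiG (M (X a) (M (X b) (M (X c) (X d)))) = [(M (M (M (X a) (X b)) (X c)) (X d), 3), (M (M (M (X a) (X b)) (X d)) (X c), -1), (M (M (M (X a) (X c)) (X b)) (X d), -1), (M (M (M (X a) (X c)) (X d)) (X b), -1)]"
| "PsiG (M (X a) (M (M (X b) (X c)) (X d))) = [(M (M (M (X a) (X b)) (X c)) (X d), 4)]"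
| "PsiG (M (M (X a) (X b)) (M (X c) (X d))) = [(M (M (M (X a) (X b)) (X c)) (X d), 1), (M (M (M (X a) (X b)) (X d)) (X c), -1), (M (M (M (X a) (X c)) (X b)) (X d), 3), (M (M (M (X a) (X c)) (X d)) (X b), -1)]"
| "PsiG (M (M (X a) (M (X b) (X c))) (X d)) = [(M (M (M (X a) (X b)) (X c)) (X d), 3), (M (M (M (X a) (X b)) (X d)) (X c), -1)]"
| "PsiG (M (M (M (X a) (X b)) (X c)) (X d)) = [(M (M (M (X a) (X b)) (X c)) (X d), 1), (M (M (M (X a) (X b)) (X d)) (X c), -1), (M (M (M (X a) (X c)) (X b)) (X d), 4)]"
| "PsiG _ = []"

definition psiL :: "ilist \<Rightarrow> ilist" where
  "psiL xs = concat (map (\<lambda>(m, c). lscale c (PsiG m)) xs)"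

datatype lgen = GA nmon nmon | GJ nmon nmon nmon

fun gen_l :: "lgen \<Rightarrow> ilist" where
  "gen_l (GA u v) = [(M u v, 1), (M v u, 1)]"
| "gen_l (GJ u v w) = [(M (M u v) w, 1), (M (M v w) u, 1), (M (M w u) v, 1)]"

definition cert_l :: "(int \<times> lgen \<times> (bool \<times> nmon) list) list \<Rightarrow> ilist" where
  "cert_l es = concat (map (\<lambda>(c, g, C). lscale c (ctx_l C (gen_l g))) es)"

fun S_l :: "nat \<Rightarrow> nmon \<Rightarrow> nmon \<Rightarrow> nmon \<Rightarrow> ilist" where
  "S_l j u v w = (if j = 1 then
     [(M (M u v) w, 1), (M u (M v w), -1), (M (M v u) w, -1), (M v (M u w), 1)]
   else [(M u (M v w), 1), (M v (M u w), 1), (M u (M w v), 1), (M w (M u v), 1), (M v (M w u), 1), (M w (M v u), 1)])"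

definition chkC :: "nmon \<Rightarrow> ilist" where
  "chkC t = [(t, 12)] @ lscale (-1) (psiL (ceval_l t))"

definition chkB :: "nat \<Rightarrow> (bool \<times> nmon) list \<Rightarrow> nmon \<Rightarrow> nmon \<Rightarrow> nmon \<Rightarrow> ilist" where
  "chkB j C u v w = psiL (ctx_l C (S_l j u v w))"

lemma chkC_0: "eqn (chkC (X 0)) (cert_l
    [])"
  by code_simp

lemma chkC_1: "eqn (chkC (M (X 0) (X 1))) (cert_l
    [(6, GA (X 0) (X 1), [])])"
  by code_simp

lemma chkC_2: "eqn (chkC (M (X 0) (M (X 1) (X 2)))) (cert_l
    [(8, GA (X 0) (M (X 1) (X 2)), []),
    (4, GA (X 1) (X 2), [(True, X 0)]),
    (-4, GA (X 0) (M (X 2) (X 1)), []),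
    (4, GA (X 1) (M (X 0) (X 2)), []),
    (-4, GA (X 0) (X 2), [(True, X 1)]),
    (4, GA (X 1) (M (X 2) (X 0)), []),
    (-4, GJ (X 0) (X 1) (X 2), [])])"
  by code_simp

lemma chkC_3: "eqn (chkC (M (M (X 0) (X 1)) (X 2))) (cert_l
    [(-4, GA (X 0) (M (X 1) (X 2)), []),
    (4, GA (X 1) (X 2), [(True, X 0)]),
    (-4, GA (X 0) (M (X 2) (X 1)), []),
    (4, GA (X 2) (M (X 0) (X 1)), []),
    (-4, GA (X 0) (X 1), [(True, X 2)]),
    (4, GA (X 2) (M (X 1) (X 0)), []),
    (4, GJ (X 0) (X 1) (X 2), [])])"
  by code_simp

lemma chkC_4: "eqn (chkC (M (X 0) (M (X 1) (M (X 2) (X 3))))) (cert_l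
    [(11, GA (X 1) (M (X 2) (X 3)), [(True, X 0)]),
    (1, GA (X 2) (X 3), [(True, X 1), (True, X 0)]),
    (-1, GA (X 1) (M (X 3) (X 2)), [(True, X 0)]),
    (3, GA (X 0) (M (X 2) (M (X 1) (X 3))), []),
    (3, GA (X 2) (M (X 1) (X 3)), [(True, X 0)]),
    (-6, GA (X 1) (X 3), [(True, X 2), (True, X 0)]),
    (6, GA (X 2) (M (X 3) (X 1)), [(True, X 0)]),
    (-3, GA (X 0) (M (X 3) (M (X 1) (X 2))), []),
    (7, GA (X 3) (M (X 1) (X 2)), [(True, X 0)]),
    (-4, GA (X 1) (X 2), [(True, X 3), (True, X 0)]),
    (4, GA (X 3) (M (X 2) (X 1)), [(True, X 0)]),
    (1, GA (X 0) (M (X 2) (X 3)), [(True, X 1)]),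
    (-1, GA (X 2) (X 3), [(True, X 0), (True, X 1)]),
    (1, GA (X 0) (M (X 3) (X 2)), [(True, X 1)]),
    (-3, GA (X 1) (M (X 2) (M (X 0) (X 3))), []),
    (5, GA (X 2) (M (X 0) (X 3)), [(True, X 1)]),
    (-2, GA (X 0) (X 3), [(True, X 2), (True, X 1)]),
    (2, GA (X 2) (M (X 3) (X 0)), [(True, X 1)]),
    (3, GA (X 1) (M (X 3) (M (X 0) (X 2))), []),
    (-3, GA (X 3) (M (X 0) (X 2)), [(True, X 1)]),
    (4, GA (X 1) (M (X 0) (X 3)), [(True, X 2)]),
    (-4, GA (X 0) (X 3), [(True, X 1), (True, X 2)]),
    (4, GA (X 1) (M (X 3) (X 0)), [(True, X 2)]),
    (-4, GA (X 1) (M (X 0) (X 2)), [(True, X 3)]),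
    (4, GA (X 0) (X 2), [(True, X 1), (True, X 3)]),
    (-4, GA (X 1) (M (X 2) (X 0)), [(True, X 3)]),
    (3, GA (X 0) (M (M (X 1) (X 2)) (X 3)), []),
    (-10, GJ (X 1) (X 2) (X 3), [(True, X 0)]),
    (-3, GA (X 0) (M (M (X 1) (X 3)) (X 2)), []),
    (-4, GA (X 0) (M (M (X 2) (X 1)) (X 3)), []),
    (-1, GA (X 0) (M (M (X 2) (X 3)) (X 1)), []),
    (4, GA (X 0) (M (M (X 3) (X 1)) (X 2)), []),
    (1, GA (X 0) (M (M (X 3) (X 2)) (X 1)), []),
    (5, GA (X 1) (M (M (X 0) (X 2)) (X 3)), []),
    (-2, GJ (X 0) (X 2) (X 3), [(True, X 1)]),
    (-5, GA (X 1) (M (M (X 0) (X 3)) (X 2)), []),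
    (1, GA (X 1) (M (M (X 2) (X 3)) (X 0)), []),
    (-1, GA (X 1) (M (M (X 3) (X 2)) (X 0)), []),
    (4, GA (X 2) (M (M (X 0) (X 1)) (X 3)), []),
    (-4, GJ (X 0) (X 1) (X 3), [(True, X 2)]),
    (-4, GA (X 2) (M (M (X 0) (X 3)) (X 1)), []),
    (4, GA (X 2) (M (M (X 1) (X 3)) (X 0)), []),
    (-4, GA (X 3) (M (M (X 0) (X 1)) (X 2)), []),
    (4, GJ (X 0) (X 1) (X 2), [(True, X 3)]),
    (4, GA (X 3) (M (M (X 0) (X 2)) (X 1)), []),
    (-4, GA (X 3) (M (M (X 1) (X 2)) (X 0)), []),
    (3, GA (M (X 0) (X 2)) (M (X 1) (X 3)), []),
    (-3, GJ (X 0) (X 2) (M (X 1) (X 3)), []),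
    (-3, GA (M (X 0) (X 3)) (M (X 1) (X 2)), []),
    (3, GJ (X 0) (X 3) (M (X 1) (X 2)), []),
    (3, GJ (X 1) (X 2) (M (X 0) (X 3)), []),
    (-3, GJ (X 1) (X 3) (M (X 0) (X 2)), [])])"
  by code_simp

lemma chkC_5: "eqn (chkC (M (X 0) (M (M (X 1) (X 2)) (X 3)))) (cert_l
    [(-3, GA (X 1) (M (X 2) (X 3)), [(True, X 0)]),
    (3, GA (X 2) (X 3), [(True, X 1), (True, X 0)]),
    (-3, GA (X 1) (M (X 3) (X 2)), [(True, X 0)]),
    (-4, GA (X 2) (M (X 1) (X 3)), [(True, X 0)]),
    (4, GA (X 1) (X 3), [(True, X 2), (True, X 0)]),
    (-4, GA (X 2) (M (X 3) (X 1)), [(True, X 0)]),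
    (-3, GA (X 0) (M (X 3) (M (X 1) (X 2))), []),
    (4, GA (X 3) (M (X 1) (X 2)), [(True, X 0)]),
    (-1, GA (X 1) (X 2), [(True, X 3), (True, X 0)]),
    (1, GA (X 3) (M (X 2) (X 1)), [(True, X 0)]),
    (1, GA (X 0) (M (X 2) (X 3)), [(True, X 1)]),
    (-1, GA (X 2) (X 3), [(True, X 0), (True, X 1)]),
    (1, GA (X 0) (M (X 3) (X 2)), [(True, X 1)]),
    (-3, GA (X 1) (M (X 2) (M (X 0) (X 3))), []),
    (4, GA (X 2) (M (X 0) (X 3)), [(True, X 1)]),
    (-1, GA (X 0) (X 3), [(True, X 2), (True, X 1)]),
    (1, GA (X 2) (M (X 3) (X 0)), [(True, X 1)]),
    (-1, GA (X 0) (M (X 1) (X 3)), [(True, X 2)]),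
    (1, GA (X 1) (X 3), [(True, X 0), (True, X 2)]),
    (-1, GA (X 0) (M (X 3) (X 1)), [(True, X 2)]),
    (-1, GA (X 1) (M (X 0) (X 3)), [(True, X 2)]),
    (1, GA (X 0) (X 3), [(True, X 1), (True, X 2)]),
    (-1, GA (X 1) (M (X 3) (X 0)), [(True, X 2)]),
    (-1, GA (X 0) (M (X 1) (X 2)), [(True, X 3)]),
    (1, GA (X 1) (X 2), [(True, X 0), (True, X 3)]),
    (-1, GA (X 0) (M (X 2) (X 1)), [(True, X 3)]),
    (-5, GA (X 1) (M (X 0) (X 2)), [(True, X 3)]),
    (5, GA (X 0) (X 2), [(True, X 1), (True, X 3)]),
    (-5, GA (X 1) (M (X 2) (X 0)), [(True, X 3)]),
    (1, GA (X 0) (M (M (X 1) (X 2)) (X 3)), []),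
    (7, GJ (X 1) (X 2) (X 3), [(True, X 0)]),
    (4, GA (X 0) (M (M (X 1) (X 3)) (X 2)), []),
    (-1, GA (X 0) (M (M (X 2) (X 1)) (X 3)), []),
    (-4, GA (X 0) (M (M (X 2) (X 3)) (X 1)), []),
    (-3, GA (X 0) (M (M (X 3) (X 1)) (X 2)), []),
    (3, GA (X 0) (M (M (X 3) (X 2)) (X 1)), []),
    (1, GA (X 1) (M (M (X 0) (X 2)) (X 3)), []),
    (-1, GJ (X 0) (X 2) (X 3), [(True, X 1)]),
    (-4, GA (X 1) (M (M (X 0) (X 3)) (X 2)), []),
    (-1, GA (X 1) (M (M (X 3) (X 2)) (X 0)), []),
    (-1, GA (X 2) (M (M (X 0) (X 1)) (X 3)), []),
    (1, GJ (X 0) (X 1) (X 3), [(True, X 2)]),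
    (1, GA (X 2) (M (M (X 0) (X 3)) (X 1)), []),
    (1, GA (X 2) (M (M (X 3) (X 1)) (X 0)), []),
    (-5, GA (X 3) (M (M (X 0) (X 1)) (X 2)), []),
    (5, GJ (X 0) (X 1) (X 2), [(True, X 3)]),
    (5, GA (X 3) (M (M (X 0) (X 2)) (X 1)), []),
    (-4, GA (X 3) (M (M (X 1) (X 2)) (X 0)), []),
    (1, GA (X 3) (M (M (X 2) (X 1)) (X 0)), []),
    (-3, GA (M (X 0) (X 3)) (M (X 1) (X 2)), []),
    (3, GJ (X 0) (X 3) (M (X 1) (X 2)), []),
    (3, GJ (X 1) (X 2) (M (X 0) (X 3)), [])])"
  by code_simp

lemma chkC_6: "eqn (chkC (M (M (X 0) (X 1)) (M (X 2) (X 3)))) (cert_l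
    [(-12, GA (X 0) (M (X 1) (M (X 2) (X 3))), []),
    (10, GA (X 1) (M (X 2) (X 3)), [(True, X 0)]),
    (2, GA (X 2) (X 3), [(True, X 1), (True, X 0)]),
    (-2, GA (X 1) (M (X 3) (X 2)), [(True, X 0)]),
    (6, GA (X 0) (M (X 2) (M (X 1) (X 3))), []),
    (-1, GA (X 2) (M (X 1) (X 3)), [(True, X 0)]),
    (-5, GA (X 1) (X 3), [(True, X 2), (True, X 0)]),
    (5, GA (X 2) (M (X 3) (X 1)), [(True, X 0)]),
    (-6, GA (X 0) (M (X 3) (M (X 1) (X 2))), []),
    (9, GA (X 3) (M (X 1) (X 2)), [(True, X 0)]),
    (-3, GA (X 1) (X 2), [(True, X 3), (True, X 0)]),
    (3, GA (X 3) (M (X 2) (X 1)), [(True, X 0)]),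
    (2, GA (X 0) (M (X 2) (X 3)), [(True, X 1)]),
    (-2, GA (X 2) (X 3), [(True, X 0), (True, X 1)]),
    (2, GA (X 0) (M (X 3) (X 2)), [(True, X 1)]),
    (-6, GA (X 1) (M (X 2) (M (X 0) (X 3))), []),
    (1, GA (X 2) (M (X 0) (X 3)), [(True, X 1)]),
    (5, GA (X 0) (X 3), [(True, X 2), (True, X 1)]),
    (-5, GA (X 2) (M (X 3) (X 0)), [(True, X 1)]),
    (6, GA (X 1) (M (X 3) (M (X 0) (X 2))), []),
    (-9, GA (X 3) (M (X 0) (X 2)), [(True, X 1)]),
    (3, GA (X 0) (X 2), [(True, X 3), (True, X 1)]),
    (-3, GA (X 3) (M (X 2) (X 0)), [(True, X 1)]),
    (1, GA (X 0) (M (X 1) (X 3)), [(True, X 2)]),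
    (-1, GA (X 1) (X 3), [(True, X 0), (True, X 2)]),
    (1, GA (X 0) (M (X 3) (X 1)), [(True, X 2)]),
    (3, GA (X 1) (M (X 0) (X 3)), [(True, X 2)]),
    (-3, GA (X 0) (X 3), [(True, X 1), (True, X 2)]),
    (3, GA (X 1) (M (X 3) (X 0)), [(True, X 2)]),
    (2, GA (X 3) (M (X 0) (X 1)), [(True, X 2)]),
    (-2, GA (X 0) (X 1), [(True, X 3), (True, X 2)]),
    (2, GA (X 3) (M (X 1) (X 0)), [(True, X 2)]),
    (-1, GA (X 0) (M (X 1) (X 2)), [(True, X 3)]),
    (1, GA (X 1) (X 2), [(True, X 0), (True, X 3)]),
    (-1, GA (X 0) (M (X 2) (X 1)), [(True, X 3)]),
    (-3, GA (X 1) (M (X 0) (X 2)), [(True, X 3)]),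
    (3, GA (X 0) (X 2), [(True, X 1), (True, X 3)]),
    (-3, GA (X 1) (M (X 2) (X 0)), [(True, X 3)]),
    (-2, GA (X 2) (M (X 0) (X 1)), [(True, X 3)]),
    (2, GA (X 0) (X 1), [(True, X 2), (True, X 3)]),
    (-2, GA (X 2) (M (X 1) (X 0)), [(True, X 3)]),
    (-1, GA (X 0) (M (M (X 1) (X 2)) (X 3)), []),
    (-8, GJ (X 1) (X 2) (X 3), [(True, X 0)]),
    (1, GA (X 0) (M (M (X 1) (X 3)) (X 2)), []),
    (-3, GA (X 0) (M (M (X 2) (X 1)) (X 3)), []),
    (-2, GA (X 0) (M (M (X 2) (X 3)) (X 1)), []),
    (3, GA (X 0) (M (M (X 3) (X 1)) (X 2)), []),
    (2, GA (X 0) (M (M (X 3) (X 2)) (X 1)), []),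
    (1, GA (X 1) (M (M (X 0) (X 2)) (X 3)), []),
    (8, GJ (X 0) (X 2) (X 3), [(True, X 1)]),
    (-1, GA (X 1) (M (M (X 0) (X 3)) (X 2)), []),
    (3, GA (X 1) (M (M (X 2) (X 0)) (X 3)), []),
    (-10, GA (X 1) (M (M (X 2) (X 3)) (X 0)), []),
    (-3, GA (X 1) (M (M (X 3) (X 0)) (X 2)), []),
    (-2, GA (X 1) (M (M (X 3) (X 2)) (X 0)), []),
    (2, GA (X 2) (M (M (X 0) (X 1)) (X 3)), []),
    (-4, GJ (X 0) (X 1) (X 3), [(True, X 2)]),
    (-3, GA (X 2) (M (M (X 0) (X 3)) (X 1)), []),
    (-2, GA (X 2) (M (M (X 1) (X 0)) (X 3)), []),
    (3, GA (X 2) (M (M (X 1) (X 3)) (X 0)), []),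
    (1, GA (X 2) (M (M (X 3) (X 0)) (X 1)), []),
    (-1, GA (X 2) (M (M (X 3) (X 1)) (X 0)), []),
    (-2, GA (X 3) (M (M (X 0) (X 1)) (X 2)), []),
    (4, GJ (X 0) (X 1) (X 2), [(True, X 3)]),
    (3, GA (X 3) (M (M (X 0) (X 2)) (X 1)), []),
    (2, GA (X 3) (M (M (X 1) (X 0)) (X 2)), []),
    (-3, GA (X 3) (M (M (X 1) (X 2)) (X 0)), []),
    (-1, GA (X 3) (M (M (X 2) (X 0)) (X 1)), []),
    (1, GA (X 3) (M (M (X 2) (X 1)) (X 0)), []),
    (12, GJ (X 0) (X 1) (M (X 2) (X 3)), []),
    (6, GA (M (X 0) (X 2)) (M (X 1) (X 3)), []),
    (-6, GJ (X 0) (X 2) (M (X 1) (X 3)), []),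
    (-6, GA (M (X 0) (X 3)) (M (X 1) (X 2)), []),
    (6, GJ (X 0) (X 3) (M (X 1) (X 2)), []),
    (6, GJ (X 1) (X 2) (M (X 0) (X 3)), []),
    (-6, GJ (X 1) (X 3) (M (X 0) (X 2)), [])])"
  by code_simp

lemma chkC_7: "eqn (chkC (M (M (X 0) (M (X 1) (X 2))) (X 3))) (cert_l
    [(-5, GA (X 1) (M (X 2) (X 3)), [(True, X 0)]),
    (5, GA (X 2) (X 3), [(True, X 1), (True, X 0)]),
    (-5, GA (X 1) (M (X 3) (X 2)), [(True, X 0)]),
    (3, GA (X 0) (M (X 3) (M (X 1) (X 2))), []),
    (-4, GA (X 3) (M (X 1) (X 2)), [(True, X 0)]),
    (1, GA (X 1) (X 2), [(True, X 3), (True, X 0)]),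
    (-1, GA (X 3) (M (X 2) (X 1)), [(True, X 0)]),
    (-1, GA (X 0) (M (X 2) (X 3)), [(True, X 1)]),
    (1, GA (X 2) (X 3), [(True, X 0), (True, X 1)]),
    (-1, GA (X 0) (M (X 3) (X 2)), [(True, X 1)]),
    (3, GA (X 1) (M (X 2) (M (X 0) (X 3))), []),
    (-3, GA (X 0) (X 3), [(True, X 2), (True, X 1)]),
    (3, GA (X 2) (M (X 3) (X 0)), [(True, X 1)]),
    (1, GA (X 0) (M (X 1) (X 3)), [(True, X 2)]),
    (-1, GA (X 1) (X 3), [(True, X 0), (True, X 2)]),
    (1, GA (X 0) (M (X 3) (X 1)), [(True, X 2)]),
    (-3, GA (X 1) (M (X 0) (X 3)), [(True, X 2)]),
    (3, GA (X 0) (X 3), [(True, X 1), (True, X 2)]),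
    (-3, GA (X 1) (M (X 3) (X 0)), [(True, X 2)]),
    (12, GA (X 3) (M (X 0) (M (X 1) (X 2))), []),
    (-11, GA (X 0) (M (X 1) (X 2)), [(True, X 3)]),
    (-1, GA (X 1) (X 2), [(True, X 0), (True, X 3)]),
    (1, GA (X 0) (M (X 2) (X 1)), [(True, X 3)]),
    (-3, GA (X 1) (M (X 0) (X 2)), [(True, X 3)]),
    (3, GA (X 0) (X 2), [(True, X 1), (True, X 3)]),
    (-3, GA (X 1) (M (X 2) (X 0)), [(True, X 3)]),
    (-4, GA (X 2) (M (X 0) (X 1)), [(True, X 3)]),
    (4, GA (X 0) (X 1), [(True, X 2), (True, X 3)]),
    (-4, GA (X 2) (M (X 1) (X 0)), [(True, X 3)]),
    (-1, GA (X 0) (M (M (X 1) (X 2)) (X 3)), []),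
    (5, GJ (X 1) (X 2) (X 3), [(True, X 0)]),
    (1, GA (X 0) (M (M (X 2) (X 1)) (X 3)), []),
    (-5, GA (X 0) (M (M (X 3) (X 1)) (X 2)), []),
    (5, GA (X 0) (M (M (X 3) (X 2)) (X 1)), []),
    (-1, GA (X 1) (M (M (X 0) (X 2)) (X 3)), []),
    (1, GJ (X 0) (X 2) (X 3), [(True, X 1)]),
    (-4, GA (X 1) (M (M (X 3) (X 0)) (X 2)), []),
    (1, GA (X 1) (M (M (X 3) (X 2)) (X 0)), []),
    (1, GA (X 2) (M (M (X 0) (X 1)) (X 3)), []),
    (-1, GJ (X 0) (X 1) (X 3), [(True, X 2)]),
    (3, GA (X 2) (M (M (X 0) (X 3)) (X 1)), []),
    (4, GA (X 2) (M (M (X 3) (X 0)) (X 1)), []),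
    (-1, GA (X 2) (M (M (X 3) (X 1)) (X 0)), []),
    (-3, GA (X 3) (M (M (X 0) (X 1)) (X 2)), []),
    (7, GJ (X 0) (X 1) (X 2), [(True, X 3)]),
    (3, GA (X 3) (M (M (X 0) (X 2)) (X 1)), []),
    (4, GA (X 3) (M (M (X 1) (X 0)) (X 2)), []),
    (4, GA (X 3) (M (M (X 1) (X 2)) (X 0)), []),
    (-4, GA (X 3) (M (M (X 2) (X 0)) (X 1)), []),
    (-1, GA (X 3) (M (M (X 2) (X 1)) (X 0)), []),
    (3, GA (M (X 0) (X 3)) (M (X 1) (X 2)), []),
    (-3, GJ (X 0) (X 3) (M (X 1) (X 2)), []),
    (-3, GJ (X 1) (X 2) (M (X 0) (X 3)), [])])"
  by code_simp

lemma chkC_8: "eqn (chkC (M (M (M (X 0) (X 1)) (X 2)) (X 3))) (cert_l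
    [(-4, GA (X 1) (M (X 2) (X 3)), [(True, X 0)]),
    (4, GA (X 2) (X 3), [(True, X 1), (True, X 0)]),
    (-4, GA (X 1) (M (X 3) (X 2)), [(True, X 0)]),
    (-3, GA (X 0) (M (X 2) (M (X 1) (X 3))), []),
    (3, GA (X 1) (X 3), [(True, X 2), (True, X 0)]),
    (-3, GA (X 2) (M (X 3) (X 1)), [(True, X 0)]),
    (3, GA (X 0) (M (X 3) (M (X 1) (X 2))), []),
    (-4, GA (X 3) (M (X 1) (X 2)), [(True, X 0)]),
    (1, GA (X 1) (X 2), [(True, X 3), (True, X 0)]),
    (-1, GA (X 3) (M (X 2) (X 1)), [(True, X 0)]),
    (4, GA (X 0) (M (X 2) (X 3)), [(True, X 1)]),
    (-4, GA (X 2) (X 3), [(True, X 0), (True, X 1)]),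
    (4, GA (X 0) (M (X 3) (X 2)), [(True, X 1)]),
    (3, GA (X 1) (M (X 2) (M (X 0) (X 3))), []),
    (-3, GA (X 0) (X 3), [(True, X 2), (True, X 1)]),
    (3, GA (X 2) (M (X 3) (X 0)), [(True, X 1)]),
    (-3, GA (X 1) (M (X 3) (M (X 0) (X 2))), []),
    (4, GA (X 3) (M (X 0) (X 2)), [(True, X 1)]),
    (-1, GA (X 0) (X 2), [(True, X 3), (True, X 1)]),
    (1, GA (X 3) (M (X 2) (X 0)), [(True, X 1)]),
    (5, GA (X 0) (M (X 1) (X 3)), [(True, X 2)]),
    (-5, GA (X 1) (X 3), [(True, X 0), (True, X 2)]),
    (5, GA (X 0) (M (X 3) (X 1)), [(True, X 2)]),
    (-3, GA (X 1) (M (X 0) (X 3)), [(True, X 2)]),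
    (3, GA (X 0) (X 3), [(True, X 1), (True, X 2)]),
    (-3, GA (X 1) (M (X 3) (X 0)), [(True, X 2)]),
    (1, GA (X 3) (M (X 0) (X 1)), [(True, X 2)]),
    (-1, GA (X 0) (X 1), [(True, X 3), (True, X 2)]),
    (1, GA (X 3) (M (X 1) (X 0)), [(True, X 2)]),
    (3, GA (X 0) (M (X 1) (X 2)), [(True, X 3)]),
    (-3, GA (X 1) (X 2), [(True, X 0), (True, X 3)]),
    (3, GA (X 0) (M (X 2) (X 1)), [(True, X 3)]),
    (7, GA (X 1) (M (X 0) (X 2)), [(True, X 3)]),
    (-7, GA (X 0) (X 2), [(True, X 1), (True, X 3)]),
    (7, GA (X 1) (M (X 2) (X 0)), [(True, X 3)]),
    (-1, GA (X 2) (M (X 0) (X 1)), [(True, X 3)]),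
    (1, GA (X 0) (X 1), [(True, X 2), (True, X 3)]),
    (-1, GA (X 2) (M (X 1) (X 0)), [(True, X 3)]),
    (4, GJ (X 1) (X 2) (X 3), [(True, X 0)]),
    (1, GA (X 0) (M (M (X 2) (X 1)) (X 3)), []),
    (-1, GA (X 0) (M (M (X 3) (X 1)) (X 2)), []),
    (4, GA (X 0) (M (M (X 3) (X 2)) (X 1)), []),
    (-4, GJ (X 0) (X 2) (X 3), [(True, X 1)]),
    (-1, GA (X 1) (M (M (X 2) (X 0)) (X 3)), []),
    (1, GA (X 1) (M (M (X 3) (X 0)) (X 2)), []),
    (-4, GA (X 1) (M (M (X 3) (X 2)) (X 0)), []),
    (1, GA (X 2) (M (M (X 0) (X 1)) (X 3)), []),
    (-2, GJ (X 0) (X 1) (X 3), [(True, X 2)]),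
    (3, GA (X 2) (M (M (X 0) (X 3)) (X 1)), []),
    (-1, GA (X 2) (M (M (X 1) (X 0)) (X 3)), []),
    (-3, GA (X 2) (M (M (X 1) (X 3)) (X 0)), []),
    (5, GA (X 2) (M (M (X 3) (X 0)) (X 1)), []),
    (-5, GA (X 2) (M (M (X 3) (X 1)) (X 0)), []),
    (11, GA (X 3) (M (M (X 0) (X 1)) (X 2)), []),
    (-10, GJ (X 0) (X 1) (X 2), [(True, X 3)]),
    (-7, GA (X 3) (M (M (X 0) (X 2)) (X 1)), []),
    (1, GA (X 3) (M (M (X 1) (X 0)) (X 2)), []),
    (7, GA (X 3) (M (M (X 1) (X 2)) (X 0)), []),
    (3, GA (X 3) (M (M (X 2) (X 0)) (X 1)), []),
    (-3, GA (X 3) (M (M (X 2) (X 1)) (X 0)), []),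
    (-3, GA (M (X 0) (X 2)) (M (X 1) (X 3)), []),
    (3, GJ (X 0) (X 2) (M (X 1) (X 3)), []),
    (3, GA (M (X 0) (X 3)) (M (X 1) (X 2)), []),
    (-3, GJ (X 0) (X 3) (M (X 1) (X 2)), []),
    (-3, GJ (X 1) (X 2) (M (X 0) (X 3)), []),
    (3, GJ (X 1) (X 3) (M (X 0) (X 2)), [])])"
  by code_simp

lemma chkB_9: "eqn (chkB 1 [] (X 0) (X 1) (X 2)) (cert_l
    [])"
  by code_simp

lemma chkB_10: "eqn (chkB 1 [] (M (X 0) (X 1)) (X 2) (X 3)) (cert_l
    [(-1, GA (X 3) (M (X 0) (X 2)), [(True, X 1)]),
    (1, GA (X 0) (X 2), [(True, X 3), (True, X 1)]),
    (-1, GA (X 3) (M (X 2) (X 0)), [(True, X 1)]),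
    (-1, GA (X 1) (M (X 0) (X 2)), [(True, X 3)]),
    (1, GA (X 0) (X 2), [(True, X 1), (True, X 3)]),
    (-1, GA (X 1) (M (X 2) (X 0)), [(True, X 3)]),
    (1, GA (X 1) (M (M (X 0) (X 2)) (X 3)), []),
    (1, GA (X 1) (M (M (X 2) (X 0)) (X 3)), []),
    (1, GA (X 3) (M (M (X 0) (X 2)) (X 1)), []),
    (1, GA (X 3) (M (M (X 2) (X 0)) (X 1)), [])])"
  by code_simp

lemma chkB_11: "eqn (chkB 1 [] (X 0) (M (X 1) (X 2)) (X 3)) (cert_l
    [(1, GA (X 3) (M (X 0) (X 1)), [(True, X 2)]),
    (-1, GA (X 0) (X 1), [(True, X 3), (True, X 2)]),
    (1, GA (X 3) (M (X 1) (X 0)), [(True, X 2)]),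
    (1, GA (X 2) (M (X 0) (X 1)), [(True, X 3)]),
    (-1, GA (X 0) (X 1), [(True, X 2), (True, X 3)]),
    (1, GA (X 2) (M (X 1) (X 0)), [(True, X 3)]),
    (-1, GA (X 2) (M (M (X 0) (X 1)) (X 3)), []),
    (-1, GA (X 2) (M (M (X 1) (X 0)) (X 3)), []),
    (-1, GA (X 3) (M (M (X 0) (X 1)) (X 2)), []),
    (-1, GA (X 3) (M (M (X 1) (X 0)) (X 2)), [])])"
  by code_simp

lemma chkB_12: "eqn (chkB 1 [] (X 0) (X 1) (M (X 2) (X 3))) (cert_l
    [(-4, GA (X 1) (M (X 0) (X 2)), [(True, X 3)]),
    (4, GA (X 0) (X 2), [(True, X 1), (True, X 3)]),
    (-4, GA (X 1) (M (X 2) (X 0)), [(True, X 3)]),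
    (-2, GA (X 2) (M (X 0) (X 1)), [(True, X 3)]),
    (2, GA (X 0) (X 1), [(True, X 2), (True, X 3)]),
    (-2, GA (X 2) (M (X 1) (X 0)), [(True, X 3)]),
    (-2, GA (X 3) (M (M (X 0) (X 1)) (X 2)), []),
    (4, GJ (X 0) (X 1) (X 2), [(True, X 3)]),
    (4, GA (X 3) (M (M (X 0) (X 2)) (X 1)), []),
    (2, GA (X 3) (M (M (X 1) (X 0)) (X 2)), []),
    (-4, GA (X 3) (M (M (X 1) (X 2)) (X 0)), [])])"
  by code_simp

lemma chkB_13: "eqn (chkB 1 [(True, X 3)] (X 0) (X 1) (X 2)) (cert_l
    [])"
  by code_simp

lemma chkB_14: "eqn (chkB 1 [(False, X 3)] (X 0) (X 1) (X 2)) (cert_l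
    [(-4, GA (X 1) (M (X 0) (X 2)), [(True, X 3)]),
    (4, GA (X 0) (X 2), [(True, X 1), (True, X 3)]),
    (-4, GA (X 1) (M (X 2) (X 0)), [(True, X 3)]),
    (-2, GA (X 2) (M (X 0) (X 1)), [(True, X 3)]),
    (2, GA (X 0) (X 1), [(True, X 2), (True, X 3)]),
    (-2, GA (X 2) (M (X 1) (X 0)), [(True, X 3)]),
    (-2, GA (X 3) (M (M (X 0) (X 1)) (X 2)), []),
    (4, GJ (X 0) (X 1) (X 2), [(True, X 3)]),
    (4, GA (X 3) (M (M (X 0) (X 2)) (X 1)), []),
    (2, GA (X 3) (M (M (X 1) (X 0)) (X 2)), []),
    (-4, GA (X 3) (M (M (X 1) (X 2)) (X 0)), [])])"
  by code_simp

lemma chkB_15: "eqn (chkB 2 [] (X 0) (X 1) (X 2)) (cert_l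
    [(4, GA (X 0) (M (X 1) (X 2)), []),
    (-4, GA (X 1) (X 2), [(True, X 0)]),
    (4, GA (X 0) (M (X 2) (X 1)), []),
    (4, GA (X 1) (M (X 0) (X 2)), []),
    (-4, GA (X 0) (X 2), [(True, X 1)]),
    (4, GA (X 1) (M (X 2) (X 0)), []),
    (4, GA (X 2) (M (X 0) (X 1)), []),
    (-4, GA (X 0) (X 1), [(True, X 2)]),
    (4, GA (X 2) (M (X 1) (X 0)), [])])"
  by code_simp

lemma chkB_16: "eqn (chkB 2 [] (M (X 0) (X 1)) (X 2) (X 3)) (cert_l
    [(1, GA (X 1) (M (X 2) (X 3)), [(True, X 0)]),
    (-1, GA (X 2) (X 3), [(True, X 1), (True, X 0)]),
    (1, GA (X 1) (M (X 3) (X 2)), [(True, X 0)]),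
    (-3, GA (X 0) (M (X 2) (X 3)), [(True, X 1)]),
    (3, GA (X 2) (X 3), [(True, X 0), (True, X 1)]),
    (-3, GA (X 0) (M (X 3) (X 2)), [(True, X 1)]),
    (1, GA (X 2) (M (X 0) (X 3)), [(True, X 1)]),
    (-1, GA (X 0) (X 3), [(True, X 2), (True, X 1)]),
    (1, GA (X 2) (M (X 3) (X 0)), [(True, X 1)]),
    (1, GA (X 3) (M (X 0) (X 2)), [(True, X 1)]),
    (-1, GA (X 0) (X 2), [(True, X 3), (True, X 1)]),
    (1, GA (X 3) (M (X 2) (X 0)), [(True, X 1)]),
    (-3, GA (X 1) (M (X 0) (X 3)), [(True, X 2)]),
    (3, GA (X 0) (X 3), [(True, X 1), (True, X 2)]),
    (-3, GA (X 1) (M (X 3) (X 0)), [(True, X 2)]),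
    (-3, GA (X 1) (M (X 0) (X 2)), [(True, X 3)]),
    (3, GA (X 0) (X 2), [(True, X 1), (True, X 3)]),
    (-3, GA (X 1) (M (X 2) (X 0)), [(True, X 3)]),
    (-1, GA (X 0) (M (M (X 2) (X 3)) (X 1)), []),
    (-1, GA (X 0) (M (M (X 3) (X 2)) (X 1)), []),
    (-1, GA (X 1) (M (M (X 0) (X 2)) (X 3)), []),
    (-1, GA (X 1) (M (M (X 0) (X 3)) (X 2)), []),
    (-1, GA (X 1) (M (M (X 2) (X 0)) (X 3)), []),
    (3, GA (X 1) (M (M (X 2) (X 3)) (X 0)), []),
    (-1, GA (X 1) (M (M (X 3) (X 0)) (X 2)), []),
    (3, GA (X 1) (M (M (X 3) (X 2)) (X 0)), []),
    (3, GA (X 2) (M (M (X 0) (X 3)) (X 1)), []),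
    (3, GA (X 2) (M (M (X 3) (X 0)) (X 1)), []),
    (3, GA (X 3) (M (M (X 0) (X 2)) (X 1)), []),
    (3, GA (X 3) (M (M (X 2) (X 0)) (X 1)), [])])"
  by code_simp

lemma chkB_17: "eqn (chkB 2 [] (X 0) (M (X 1) (X 2)) (X 3)) (cert_l
    [(-3, GA (X 2) (M (X 1) (X 3)), [(True, X 0)]),
    (3, GA (X 1) (X 3), [(True, X 2), (True, X 0)]),
    (-3, GA (X 2) (M (X 3) (X 1)), [(True, X 0)]),
    (1, GA (X 2) (M (X 0) (X 3)), [(True, X 1)]),
    (-1, GA (X 0) (X 3), [(True, X 2), (True, X 1)]),
    (1, GA (X 2) (M (X 3) (X 0)), [(True, X 1)]),
    (1, GA (X 0) (M (X 1) (X 3)), [(True, X 2)]),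
    (-1, GA (X 1) (X 3), [(True, X 0), (True, X 2)]),
    (1, GA (X 0) (M (X 3) (X 1)), [(True, X 2)]),
    (-3, GA (X 1) (M (X 0) (X 3)), [(True, X 2)]),
    (3, GA (X 0) (X 3), [(True, X 1), (True, X 2)]),
    (-3, GA (X 1) (M (X 3) (X 0)), [(True, X 2)]),
    (1, GA (X 3) (M (X 0) (X 1)), [(True, X 2)]),
    (-1, GA (X 0) (X 1), [(True, X 3), (True, X 2)]),
    (1, GA (X 3) (M (X 1) (X 0)), [(True, X 2)]),
    (-3, GA (X 2) (M (X 0) (X 1)), [(True, X 3)]),
    (3, GA (X 0) (X 1), [(True, X 2), (True, X 3)]),
    (-3, GA (X 2) (M (X 1) (X 0)), [(True, X 3)]),
    (3, GA (X 0) (M (M (X 1) (X 3)) (X 2)), []),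
    (3, GA (X 0) (M (M (X 3) (X 1)) (X 2)), []),
    (-1, GA (X 1) (M (M (X 0) (X 3)) (X 2)), []),
    (-1, GA (X 1) (M (M (X 3) (X 0)) (X 2)), []),
    (-1, GA (X 2) (M (M (X 0) (X 1)) (X 3)), []),
    (3, GA (X 2) (M (M (X 0) (X 3)) (X 1)), []),
    (-1, GA (X 2) (M (M (X 1) (X 0)) (X 3)), []),
    (-1, GA (X 2) (M (M (X 1) (X 3)) (X 0)), []),
    (3, GA (X 2) (M (M (X 3) (X 0)) (X 1)), []),
    (-1, GA (X 2) (M (M (X 3) (X 1)) (X 0)), []),
    (3, GA (X 3) (M (M (X 0) (X 1)) (X 2)), []),
    (3, GA (X 3) (M (M (X 1) (X 0)) (X 2)), [])])"
  by code_simp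

lemma chkB_18: "eqn (chkB 2 [] (X 0) (X 1) (M (X 2) (X 3))) (cert_l
    [(-3, GA (X 3) (M (X 1) (X 2)), [(True, X 0)]),
    (3, GA (X 1) (X 2), [(True, X 3), (True, X 0)]),
    (-3, GA (X 3) (M (X 2) (X 1)), [(True, X 0)]),
    (-3, GA (X 3) (M (X 0) (X 2)), [(True, X 1)]),
    (3, GA (X 0) (X 2), [(True, X 3), (True, X 1)]),
    (-3, GA (X 3) (M (X 2) (X 0)), [(True, X 1)]),
    (1, GA (X 3) (M (X 0) (X 1)), [(True, X 2)]),
    (-1, GA (X 0) (X 1), [(True, X 3), (True, X 2)]),
    (1, GA (X 3) (M (X 1) (X 0)), [(True, X 2)]),
    (1, GA (X 0) (M (X 1) (X 2)), [(True, X 3)]),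
    (-1, GA (X 1) (X 2), [(True, X 0), (True, X 3)]),
    (1, GA (X 0) (M (X 2) (X 1)), [(True, X 3)]),
    (1, GA (X 1) (M (X 0) (X 2)), [(True, X 3)]),
    (-1, GA (X 0) (X 2), [(True, X 1), (True, X 3)]),
    (1, GA (X 1) (M (X 2) (X 0)), [(True, X 3)]),
    (-3, GA (X 2) (M (X 0) (X 1)), [(True, X 3)]),
    (3, GA (X 0) (X 1), [(True, X 2), (True, X 3)]),
    (-3, GA (X 2) (M (X 1) (X 0)), [(True, X 3)]),
    (3, GA (X 0) (M (M (X 1) (X 2)) (X 3)), []),
    (3, GA (X 0) (M (M (X 2) (X 1)) (X 3)), []),
    (3, GA (X 1) (M (M (X 0) (X 2)) (X 3)), []),
    (3, GA (X 1) (M (M (X 2) (X 0)) (X 3)), []),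
    (-1, GA (X 2) (M (M (X 0) (X 1)) (X 3)), []),
    (-1, GA (X 2) (M (M (X 1) (X 0)) (X 3)), []),
    (3, GA (X 3) (M (M (X 0) (X 1)) (X 2)), []),
    (-1, GA (X 3) (M (M (X 0) (X 2)) (X 1)), []),
    (3, GA (X 3) (M (M (X 1) (X 0)) (X 2)), []),
    (-1, GA (X 3) (M (M (X 1) (X 2)) (X 0)), []),
    (-1, GA (X 3) (M (M (X 2) (X 0)) (X 1)), []),
    (-1, GA (X 3) (M (M (X 2) (X 1)) (X 0)), [])])"
  by code_simp

lemma chkB_19: "eqn (chkB 2 [(True, X 3)] (X 0) (X 1) (X 2)) (cert_l
    [])"
  by code_simp

lemma chkB_20: "eqn (chkB 2 [(False, X 3)] (X 0) (X 1) (X 2)) (cert_l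
    [(1, GA (X 3) (M (X 1) (X 2)), [(True, X 0)]),
    (-1, GA (X 1) (X 2), [(True, X 3), (True, X 0)]),
    (1, GA (X 3) (M (X 2) (X 1)), [(True, X 0)]),
    (1, GA (X 3) (M (X 0) (X 2)), [(True, X 1)]),
    (-1, GA (X 0) (X 2), [(True, X 3), (True, X 1)]),
    (1, GA (X 3) (M (X 2) (X 0)), [(True, X 1)]),
    (1, GA (X 3) (M (X 0) (X 1)), [(True, X 2)]),
    (-1, GA (X 0) (X 1), [(True, X 3), (True, X 2)]),
    (1, GA (X 3) (M (X 1) (X 0)), [(True, X 2)]),
    (-3, GA (X 0) (M (X 1) (X 2)), [(True, X 3)]),
    (3, GA (X 1) (X 2), [(True, X 0), (True, X 3)]),
    (-3, GA (X 0) (M (X 2) (X 1)), [(True, X 3)]),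
    (-3, GA (X 1) (M (X 0) (X 2)), [(True, X 3)]),
    (3, GA (X 0) (X 2), [(True, X 1), (True, X 3)]),
    (-3, GA (X 1) (M (X 2) (X 0)), [(True, X 3)]),
    (-3, GA (X 2) (M (X 0) (X 1)), [(True, X 3)]),
    (3, GA (X 0) (X 1), [(True, X 2), (True, X 3)]),
    (-3, GA (X 2) (M (X 1) (X 0)), [(True, X 3)]),
    (-1, GA (X 0) (M (M (X 1) (X 2)) (X 3)), []),
    (-1, GA (X 0) (M (M (X 2) (X 1)) (X 3)), []),
    (-1, GA (X 1) (M (M (X 0) (X 2)) (X 3)), []),
    (-1, GA (X 1) (M (M (X 2) (X 0)) (X 3)), []),
    (-1, GA (X 2) (M (M (X 0) (X 1)) (X 3)), []),
    (-1, GA (X 2) (M (M (X 1) (X 0)) (X 3)), []),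
    (3, GA (X 3) (M (M (X 0) (X 1)) (X 2)), []),
    (3, GA (X 3) (M (M (X 0) (X 2)) (X 1)), []),
    (3, GA (X 3) (M (M (X 1) (X 0)) (X 2)), []),
    (3, GA (X 3) (M (M (X 1) (X 2)) (X 0)), []),
    (3, GA (X 3) (M (M (X 2) (X 0)) (X 1)), []),
    (3, GA (X 3) (M (M (X 2) (X 1)) (X 0)), [])])"
  by code_simp

abbreviation LL :: "'k::field napoly set" where "LL \<equiv> Tideal Lie_ids"

lemma Tideal_diff: "p \<in> Tideal S \<Longrightarrow> q \<in> Tideal S \<Longrightarrow> p - q \<in> Tideal S"
proof -
  assume "p \<in> Tideal S" "q \<in> Tideal S"
  then have "p + nsmult (-1) q \<in> Tideal S" by (intro Tideal.add Tideal.smult)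
  then show ?thesis by (simp add: nsmult_minus_one)
qed

lemma poly_eval_lin: "poly_eval \<mu> \<sigma> p = lin_ext (mon_eval \<mu> \<sigma>) p"
  by (simp add: poly_eval_def lin_ext_def)

lemma nvar_mult: "nmult (nvar i) (nvar j) = (Poly_Mapping.single (M (X i) (X j)) 1 :: 'k::field napoly)"
  by (simp add: nvar_def)

lemma nvar_mult3l: "nmult (nmult (nvar i) (nvar j)) (nvar k) = (Poly_Mapping.single (M (M (X i) (X j)) (X k)) 1 :: 'k::field napoly)"
  by (simp add: nvar_def)

lemma nvar_mult3r: "nmult (nvar i) (nmult (nvar j) (nvar k)) = (Poly_Mapping.single (M (X i) (M (X j) (X k))) 1 :: 'k::field napoly)"
  by (simp add: nvar_def)

lemma subst_A: "subst \<sigma> (nmult x0 x1 + nmult x1 x0) = nmult (\<sigma> 0) (\<sigma> 1) + nmult (\<sigma> 1) (\<sigma> (0::nat))"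
  by (simp add: poly_eval_lin nvar_mult lin_ext_add)

lemma subst_J: "subst \<sigma> (nmult (nmult x0 x1) x2 + nmult (nmult x1 x2) x0 + nmult (nmult x2 x0) x1)
   = nmult (nmult (\<sigma> 0) (\<sigma> 1)) (\<sigma> 2) + nmult (nmult (\<sigma> 1) (\<sigma> 2)) (\<sigma> 0) + nmult (nmult (\<sigma> 2) (\<sigma> 0)) (\<sigma> (1::nat))"
  by (simp add: poly_eval_lin nvar_mult3l lin_ext_add)

lemma tp_gen_in: "(tp r (gen_l g) :: 'k::field napoly) \<in> LL"
proof (cases g)
  case (GA u v)
  let ?\<sigma> = "\<lambda>i::nat. if i = 0 then Poly_Mapping.single (ren r u) 1 else (Poly_Mapping.single (ren r v) (1::'k))"
  have "subst ?\<sigma> (nmult x0 x1 + nmult x1 x0) \<in> LL"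
    by (rule Tideal.gen) (simp add: Lie_ids_def)
  then show ?thesis unfolding subst_A using GA by simp
next
  case (GJ u v w)
  let ?\<sigma> = "\<lambda>i::nat. if i = 0 then Poly_Mapping.single (ren r u) 1 else if i = 1 then Poly_Mapping.single (ren r v) 1
     else (Poly_Mapping.single (ren r w) (1::'k))"
  have "subst ?\<sigma> (nmult (nmult x0 x1) x2 + nmult (nmult x1 x2) x0 + nmult (nmult x2 x0) x1) \<in> LL"
    by (rule Tideal.gen) (simp add: Lie_ids_def)
  then show ?thesis unfolding subst_J using GJ by (simp add: add.assoc)
qed

lemma tp_ctx_in: "tp r xs \<in> Tideal S \<Longrightarrow> tp r (ctx_l C xs) \<in> Tideal S"
proof (induction C arbitrary: xs)
  case Nil
  then show ?case by simp
next
  case (Cons a C)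
  show ?case
  proof (cases "fst a")
    case True
    have "nmult (tp r [(snd a, 1)]) (tp r xs) \<in> Tideal S" using Cons.prems by (rule Tideal.multl)
    then have "tp r (lmul [(snd a, 1)] xs) \<in> Tideal S" by (simp only: tp_lmul)
    then show ?thesis using True Cons.IH by simp
  next
    case False
    have "nmult (tp r xs) (tp r [(snd a, 1)]) \<in> Tideal S" using Cons.prems by (rule Tideal.multr)
    then have "tp r (lmul xs [(snd a, 1)]) \<in> Tideal S" by (simp only: tp_lmul)
    then show ?thesis using False Cons.IH by simp
  qed
qed

lemma tp_cert_in: "(tp r (cert_l es) :: 'k::field napoly) \<in> LL"
proof (induction es)
  case Nil
  then show ?case by (simp add: cert_l_def Tideal.zero)
next
  case (Cons e es)
  obtain c g C where e: "e = (c, g, C)" by (cases e) auto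
  have "(tp r (ctx_l C (gen_l g)) :: 'k napoly) \<in> LL" by (intro tp_ctx_in tp_gen_in)
  then have "nsmult (of_int c) (tp r (ctx_l C (gen_l g)) :: 'k napoly) \<in> LL" by (rule Tideal.smult)
  then have "(tp r (lscale c (ctx_l C (gen_l g))) :: 'k napoly) \<in> LL" by (simp add: tp_lscale)
  moreover have "cert_l (e # es) = lscale c (ctx_l C (gen_l g)) @ cert_l es"
    by (simp add: cert_l_def e)
  ultimately show ?case using Cons.IH by (simp add: Tideal.add)
qed

lemma chk_in: "eqn P (cert_l es) \<Longrightarrow> (tp r P :: 'k::field napoly) \<in> LL"
proof -
  assume "eqn P (cert_l es)"
  then have "tp r P = (tp r (cert_l es) :: 'k napoly)" by (rule eqn_sound)
  moreover have "(tp r (cert_l es) :: 'k napoly) \<in> LL" by (rule tp_cert_in)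
  ultimately show ?thesis by simp
qed

section \<open>The map psi\<close>

definition psi :: "'k::field napoly \<Rightarrow> 'k napoly" where
  "psi p = lin_ext (\<lambda>t. tp id (PsiG t)) p"

lemma linmap_psi: "linmap psi"
  unfolding psi_def[abs_def] by (rule linmap_lin_ext_op)

lemma psi_add: "psi (p + q) = psi p + psi q"
  by (simp add: psi_def lin_ext_add)

lemma psi_nsmult: "psi (nsmult c p) = nsmult c (psi p)"
  by (simp add: psi_def lin_ext_nsmult)

lemma psi_zero [simp]: "psi 0 = 0"
  by (simp add: psi_def)

lemma PsiG_ren: "PsiG (ren r m) = renl r (PsiG m)"
  by (induction m rule: PsiG.induct) simp_all

lemma PsiG_deg: "PsiG m \<noteq> [] \<Longrightarrow> mdeg m \<le> 4"
  by (induction m rule: PsiG.induct) simp_all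

lemma psiL_Nil [simp]: "psiL [] = []"
  by (simp add: psiL_def)

lemma psiL_Cons [simp]: "psiL (a # xs) = lscale (snd a) (PsiG (fst a)) @ psiL xs"
  by (simp add: psiL_def case_prod_beta)

lemma psiL_append [simp]: "psiL (xs @ ys) = psiL xs @ psiL ys"
  by (simp add: psiL_def)

lemma psiL_renl: "psiL (renl r xs) = renl r (psiL xs)"
  by (induction xs) (simp_all add: PsiG_ren renl_lscale)

lemma psi_tp: "psi (tp r xs) = (tp r (psiL xs) :: 'k::field napoly)"
proof (induction xs)
  case Nil
  then show ?case by (simp add: psi_def)
next
  case (Cons a xs)
  have "psi (tp r (a # xs)) = psi (Poly_Mapping.single (ren r (fst a)) (of_int (snd a))) + (psi (tp r xs) :: 'k napoly)"
    by (simp add: psi_add)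
  also have "psi (Poly_Mapping.single (ren r (fst a)) (of_int (snd a)) :: 'k napoly)
      = tp r (lscale (snd a) (PsiG (fst a)))"
    by (simp add: psi_def PsiG_ren tp_renl_id tp_lscale)
  finally show ?case using Cons.IH by simp
qed

lemma psiL_high: "(\<And>m c. (m, c) \<in> set xs \<Longrightarrow> mdeg m > 4) \<Longrightarrow> psiL xs = []"
proof (induction xs)
  case Nil
  then show ?case by simp
next
  case (Cons a xs)
  have "mdeg (fst a) > 4" using Cons.prems[of "fst a" "snd a"] by simp
  then have "PsiG (fst a) = []" using PsiG_deg by force
  moreover have "psiL xs = []" using Cons.IH Cons.prems by (meson list.set_intros(2))
  ultimately show ?case by (simp add: lscale_def)
qed

lemma deg1: "mdeg t = 1 \<Longrightarrow> \<exists>a. t = X a"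
proof (cases t)
  case (M u v)
  assume "mdeg t = 1"
  then show ?thesis using M mdeg_pos[of u] mdeg_pos[of v] by simp
qed simp

lemma deg2: "mdeg t = 2 \<Longrightarrow> \<exists>a b. t = M (X a) (X b)"
proof (cases t)
  case (M u v)
  assume "mdeg t = 2"
  then have "mdeg u = 1" "mdeg v = 1" using M mdeg_pos[of u] mdeg_pos[of v] by simp_all
  then show ?thesis using M deg1 by blast
qed simp

lemma deg3: "mdeg t = 3 \<Longrightarrow> (\<exists>a b c. t = M (X a) (M (X b) (X c))) \<or> (\<exists>a b c. t = M (M (X a) (X b)) (X c))"
proof (cases t)
  case (M u v)
  assume "mdeg t = 3"
  then have "(mdeg u = 1 \<and> mdeg v = 2) \<or> (mdeg u = 2 \<and> mdeg v = 1)"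
    using M mdeg_pos[of u] mdeg_pos[of v] by auto
  then show ?thesis using M deg1 deg2 by blast
qed simp

lemma deg4: "mdeg t = 4 \<Longrightarrow>
   (\<exists>a b c d. t = M (X a) (M (X b) (M (X c) (X d)))) \<or>
   (\<exists>a b c d. t = M (X a) (M (M (X b) (X c)) (X d))) \<or>
   (\<exists>a b c d. t = M (M (X a) (X b)) (M (X c) (X d))) \<or>
   (\<exists>a b c d. t = M (M (X a) (M (X b) (X c))) (X d)) \<or>
   (\<exists>a b c d. t = M (M (M (X a) (X b)) (X c)) (X d))"
proof (cases t)
  case (M u v)
  assume "mdeg t = 4"
  then have "(mdeg u = 1 \<and> mdeg v = 3) \<or> (mdeg u = 2 \<and> mdeg v = 2) \<or> (mdeg u = 3 \<and> mdeg v = 1)"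
    using M mdeg_pos[of u] mdeg_pos[of v] by auto
  then show ?thesis
  proof (elim disjE conjE)
    assume "mdeg u = 1" "mdeg v = 3"
    then show ?thesis using M deg1[of u] deg3[of v] by blast
  next
    assume "mdeg u = 2" "mdeg v = 2"
    then show ?thesis using M deg2[of u] deg2[of v] by blast
  next
    assume "mdeg u = 3" "mdeg v = 1"
    then show ?thesis using M deg3[of u] deg1[of v] by blast
  qed
qed simp

lemma stepC_of:
  assumes "eqn (chkC t0) (cert_l es)"
  shows "nsmult 12 (Poly_Mapping.single (ren r t0) 1) - psi (mon_eval ncomm nvar (ren r t0))
     \<in> (LL :: 'k::field napoly set)"
proof -
  have "(tp r (chkC t0) :: 'k napoly) \<in> LL" by (rule chk_in[OF assms])
  moreover have "tp r (chkC t0) = nsmult 12 (Poly_Mapping.single (ren r t0) 1)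
       - psi (mon_eval ncomm nvar (ren r t0) :: 'k napoly)"
    by (simp add: chkC_def tp_lscale nsmult_minus_one ceval_l_correct ceval_l_ren tp_renl_id psi_tp)
  ultimately show ?thesis by simp
qed

lemma stepC:
  assumes "mdeg t \<le> 4"
  shows "nsmult 12 (Poly_Mapping.single t 1) - psi (mon_eval ncomm nvar t) \<in> (LL :: 'k::field napoly set)"
proof -
  have key: "\<And>r t0 es. eqn (chkC t0) (cert_l es) \<Longrightarrow> t = ren r t0 \<Longrightarrow>
     nsmult 12 (Poly_Mapping.single t 1) - psi (mon_eval ncomm nvar t) \<in> (LL :: 'k napoly set)"
  proof -
    fix r t0 es
    assume "eqn (chkC t0) (cert_l es)" "t = ren r t0"
    then show "nsmult 12 (Poly_Mapping.single t 1) - psi (mon_eval ncomm nvar t) \<in> (LL :: 'k napoly set)"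
      using stepC_of[of t0 es r] by simp
  qed
  have "mdeg t = 1 \<or> mdeg t = 2 \<or> mdeg t = 3 \<or> mdeg t = 4" using assms mdeg_pos[of t] by linarith
  then show ?thesis
  proof (elim disjE)
    assume "mdeg t = 1"
    then obtain a where t: "t = X a" using deg1 by blast
    show ?thesis by (rule key[OF chkC_0, of "\<lambda>i. a"]) (simp add: t)
  next
    assume "mdeg t = 2"
    then obtain a b where t: "t = M (X a) (X b)" using deg2 by blast
    show ?thesis by (rule key[OF chkC_1, of "\<lambda>i. if i = 0 then a else b"]) (simp add: t)
  next
    assume h3: "mdeg t = 3"
    have D3: "(\<exists>a b c. t = M (X a) (M (X b) (X c))) \<or> (\<exists>a b c. t = M (M (X a) (X b)) (X c))"
      by (rule deg3[OF h3])
    consider (a) a b c where "t = M (X a) (M (X b) (X c))" | (b) a b c where "t = M (M (X a) (X b)) (X c)"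
      using D3 by (elim disjE exE) blast+
    then show ?thesis
    proof cases
      case a
      show ?thesis by (rule key[OF chkC_2, of "\<lambda>i. if i = 0 then a else if i = 1 then b else c"]) (simp add: a)
    next
      case b
      show ?thesis by (rule key[OF chkC_3, of "\<lambda>i. if i = 0 then a else if i = 1 then b else c"]) (simp add: b)
    qed
  next
    assume h4: "mdeg t = 4"
    have D4: "(\<exists>a b c d. t = M (X a) (M (X b) (M (X c) (X d)))) \<or>
     (\<exists>a b c d. t = M (X a) (M (M (X b) (X c)) (X d))) \<or>
     (\<exists>a b c d. t = M (M (X a) (X b)) (M (X c) (X d))) \<or>
     (\<exists>a b c d. t = M (M (X a) (M (X b) (X c))) (X d)) \<or>
     (\<exists>a b c d. t = M (M (M (X a) (X b)) (X c)) (X d))" by (rule deg4[OF h4])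
    consider
      (a) a b c d where "t = M (X a) (M (X b) (M (X c) (X d)))"
    | (b) a b c d where "t = M (X a) (M (M (X b) (X c)) (X d))"
    | (c) a b c d where "t = M (M (X a) (X b)) (M (X c) (X d))"
    | (d) a b c d where "t = M (M (X a) (M (X b) (X c))) (X d)"
    | (e) a b c d where "t = M (M (M (X a) (X b)) (X c)) (X d)"
      using D4 by (elim disjE exE) blast+
    then show ?thesis
    proof cases
      case a
      show ?thesis by (rule key[OF chkC_4, of "\<lambda>i. if i = 0 then a else if i = 1 then b else if i = 2 then c else d"]) (simp add: a)
    next
      case b
      show ?thesis by (rule key[OF chkC_5, of "\<lambda>i. if i = 0 then a else if i = 1 then b else if i = 2 then c else d"]) (simp add: b)
    next
      case c
      show ?thesis by (rule key[OF chkC_6, of "\<lambda>i. if i = 0 then a else if i = 1 then b else if i = 2 then c else d"]) (simp add: c)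
    next
      case d
      show ?thesis by (rule key[OF chkC_7, of "\<lambda>i. if i = 0 then a else if i = 1 then b else if i = 2 then c else d"]) (simp add: d)
    next
      case e
      show ?thesis by (rule key[OF chkC_8, of "\<lambda>i. if i = 0 then a else if i = 1 then b else if i = 2 then c else d"]) (simp add: e)
    qed
  qed
qed

definition ctxdeg :: "(bool \<times> nmon) list \<Rightarrow> nat" where
  "ctxdeg C = sum_list (map (\<lambda>x. mdeg (snd x)) C)"

lemma lmul_set: "(m, k) \<in> set (lmul xs ys) \<Longrightarrow> \<exists>u v k1 k2. m = M u v \<and> (u, k1) \<in> set xs \<and> (v, k2) \<in> set ys"
  by (auto simp: lmul_def)

lemma ctx_l_deg:
  "(\<And>m k. (m, k) \<in> set xs \<Longrightarrow> mdeg m = d) \<Longrightarrow> (m, k) \<in> set (ctx_l C xs) \<Longrightarrow> mdeg m = ctxdeg C + d"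
proof (induction C arbitrary: xs d)
  case Nil
  then show ?case by (simp add: ctxdeg_def)
next
  case (Cons a C)
  let ?ys = "if fst a then lmul [(snd a, 1)] xs else lmul xs [(snd a, 1)]"
  have "\<And>m k. (m, k) \<in> set ?ys \<Longrightarrow> mdeg m = mdeg (snd a) + d"
  proof -
    fix m k assume "(m, k) \<in> set ?ys"
    then obtain u v k1 k2 where "m = M u v" and
      "(fst a \<and> (u, k1) \<in> set [(snd a, 1)] \<and> (v, k2) \<in> set xs) \<or> (\<not> fst a \<and> (u, k1) \<in> set xs \<and> (v, k2) \<in> set [(snd a, 1)])"
      by (cases "fst a") (auto dest!: lmul_set)
    then show "mdeg m = mdeg (snd a) + d" using Cons.prems(1) by auto
  qed
  note h = this
  have "(m, k) \<in> set (ctx_l C ?ys)" using Cons.prems(2) by simp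
  then have "mdeg m = ctxdeg C + (mdeg (snd a) + d)"
    using Cons.IH[of ?ys "mdeg (snd a) + d"] h by blast
  then show ?case by (simp add: ctxdeg_def)
qed

lemma S_l_deg: "(m, k) \<in> set (S_l j a b c) \<Longrightarrow> mdeg m = mdeg a + mdeg b + mdeg c"
  by (auto split: if_splits)

lemma cfgB:
  assumes "eqn (chkB j C0 u0 v0 w0) (cert_l es)"
    and "C = map (\<lambda>(b, m). (b, ren r m)) C0" "a = ren r u0" "b = ren r v0" "c = ren r w0"
  shows "(tp id (psiL (ctx_l C (S_l j a b c))) :: 'k::field napoly) \<in> LL"
proof -
  have "(tp r (chkB j C0 u0 v0 w0) :: 'k napoly) \<in> LL" by (rule chk_in[OF assms(1)])
  moreover have "S_l j a b c = renl r (S_l j u0 v0 w0)" using assms(3-5) by simp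
  ultimately show ?thesis
    by (simp add: assms(2) ctx_l_ren[symmetric] psiL_renl tp_renl_id chkB_def)
qed

lemma core1:
  "(tp id (psiL (ctx_l C (S_l 1 a b c))) :: 'k::field napoly) \<in> LL"
proof -
  have key: "\<And>C0 u0 v0 w0 es r. eqn (chkB 1 C0 u0 v0 w0) (cert_l es) \<Longrightarrow>
      C = map (\<lambda>(b, m). (b, ren r m)) C0 \<Longrightarrow> a = ren r u0 \<Longrightarrow> b = ren r v0 \<Longrightarrow> c = ren r w0 \<Longrightarrow>
      (tp id (psiL (ctx_l C (S_l 1 a b c))) :: 'k napoly) \<in> LL"
    using cfgB by blast
  let ?D = "ctxdeg C + mdeg a + mdeg b + mdeg c"
  show ?thesis
  proof (cases "?D > 4")
    case True
    have "psiL (ctx_l C (S_l 1 a b c)) = []"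
    proof (rule psiL_high)
      fix m k assume "(m, k) \<in> set (ctx_l C (S_l 1 a b c))"
      then have "mdeg m = ctxdeg C + (mdeg a + mdeg b + mdeg c)"
        by (rule ctx_l_deg[rotated]) (rule S_l_deg)
      then show "mdeg m > 4" using True by simp
    qed
    then show ?thesis by (simp add: Tideal.zero)
  next
    case False
    note pa = mdeg_pos[of a] and pb = mdeg_pos[of b] and pc = mdeg_pos[of c]
    show ?thesis
    proof (cases C)
      case Nil
      then have "(mdeg a = 1 \<and> mdeg b = 1 \<and> mdeg c = 1) \<or> (mdeg a = 2 \<and> mdeg b = 1 \<and> mdeg c = 1)
        \<or> (mdeg a = 1 \<and> mdeg b = 2 \<and> mdeg c = 1) \<or> (mdeg a = 1 \<and> mdeg b = 1 \<and> mdeg c = 2)"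
        using False pa pb pc by (auto simp: ctxdeg_def)
      then show ?thesis
      proof (elim disjE conjE)
        assume "mdeg a = 1" "mdeg b = 1" "mdeg c = 1"
        then obtain a1 a2 a3 where "a = X a1" "b = X a2" "c = X a3" using deg1 by metis
        then show ?thesis by (intro key[OF chkB_9, of "\<lambda>i. if i = 0 then a1 else if i = 1 then a2 else a3"]) (simp_all add: Nil)
      next
        assume "mdeg a = 2" "mdeg b = 1" "mdeg c = 1"
        then obtain a1 a2 a3 a4 where "a = M (X a1) (X a2)" "b = X a3" "c = X a4" using deg1 deg2 by metis
        then show ?thesis by (intro key[OF chkB_10, of "\<lambda>i. if i = 0 then a1 else if i = 1 then a2 else if i = 2 then a3 else a4"]) (simp_all add: Nil)
      next
        assume "mdeg a = 1" "mdeg b = 2" "mdeg c = 1"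
        then obtain a1 a2 a3 a4 where "a = X a1" "b = M (X a2) (X a3)" "c = X a4" using deg1 deg2 by metis
        then show ?thesis by (intro key[OF chkB_11, of "\<lambda>i. if i = 0 then a1 else if i = 1 then a2 else if i = 2 then a3 else a4"]) (simp_all add: Nil)
      next
        assume "mdeg a = 1" "mdeg b = 1" "mdeg c = 2"
        then obtain a1 a2 a3 a4 where "a = X a1" "b = X a2" "c = M (X a3) (X a4)" using deg1 deg2 by metis
        then show ?thesis by (intro key[OF chkB_12, of "\<lambda>i. if i = 0 then a1 else if i = 1 then a2 else if i = 2 then a3 else a4"]) (simp_all add: Nil)
      qed
    next
      case (Cons x rest)
      obtain bo m0 where x: "x = (bo, m0)" by fastforce
      have "rest = []"
      proof (rule ccontr)
        assume "rest \<noteq> []"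
        then obtain y rest' where "rest = y # rest'" by (cases rest) auto
        then have "ctxdeg C \<ge> 2" using Cons mdeg_pos[of m0] mdeg_pos[of "snd y"] x by (simp add: ctxdeg_def)
        then show False using False pa pb pc by simp
      qed
      then have "mdeg m0 = 1" "mdeg a = 1" "mdeg b = 1" "mdeg c = 1"
        using False pa pb pc mdeg_pos[of m0] Cons x by (auto simp: ctxdeg_def)
      then obtain a1 a2 a3 a4 where abc: "a = X a1" "b = X a2" "c = X a3" "m0 = X a4" using deg1 by metis
      show ?thesis
      proof (cases bo)
        case True
        show ?thesis by (intro key[OF chkB_13, of "\<lambda>i. if i = 0 then a1 else if i = 1 then a2 else if i = 2 then a3 else a4"]) (simp_all add: Cons x abc True \<open>rest = []\<close>)
      next
        case False
        show ?thesis by (intro key[OF chkB_14, of "\<lambda>i. if i = 0 then a1 else if i = 1 then a2 else if i = 2 then a3 else a4"]) (simp_all add: Cons x abc False \<open>rest = []\<close>)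
      qed
    qed
  qed
qed

lemma core2:
  "(tp id (psiL (ctx_l C (S_l 2 a b c))) :: 'k::field napoly) \<in> LL"
proof -
  have key: "\<And>C0 u0 v0 w0 es r. eqn (chkB 2 C0 u0 v0 w0) (cert_l es) \<Longrightarrow>
      C = map (\<lambda>(b, m). (b, ren r m)) C0 \<Longrightarrow> a = ren r u0 \<Longrightarrow> b = ren r v0 \<Longrightarrow> c = ren r w0 \<Longrightarrow>
      (tp id (psiL (ctx_l C (S_l 2 a b c))) :: 'k napoly) \<in> LL"
    using cfgB by blast
  let ?D = "ctxdeg C + mdeg a + mdeg b + mdeg c"
  show ?thesis
  proof (cases "?D > 4")
    case True
    have "psiL (ctx_l C (S_l 2 a b c)) = []"
    proof (rule psiL_high)
      fix m k assume "(m, k) \<in> set (ctx_l C (S_l 2 a b c))"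
      then have "mdeg m = ctxdeg C + (mdeg a + mdeg b + mdeg c)"
        by (rule ctx_l_deg[rotated]) (rule S_l_deg)
      then show "mdeg m > 4" using True by simp
    qed
    then show ?thesis by (simp add: Tideal.zero)
  next
    case False
    note pa = mdeg_pos[of a] and pb = mdeg_pos[of b] and pc = mdeg_pos[of c]
    show ?thesis
    proof (cases C)
      case Nil
      then have "(mdeg a = 1 \<and> mdeg b = 1 \<and> mdeg c = 1) \<or> (mdeg a = 2 \<and> mdeg b = 1 \<and> mdeg c = 1)
        \<or> (mdeg a = 1 \<and> mdeg b = 2 \<and> mdeg c = 1) \<or> (mdeg a = 1 \<and> mdeg b = 1 \<and> mdeg c = 2)"
        using False pa pb pc by (auto simp: ctxdeg_def)
      then show ?thesis
      proof (elim disjE conjE)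
        assume "mdeg a = 1" "mdeg b = 1" "mdeg c = 1"
        then obtain a1 a2 a3 where "a = X a1" "b = X a2" "c = X a3" using deg1 by metis
        then show ?thesis by (intro key[OF chkB_15, of "\<lambda>i. if i = 0 then a1 else if i = 1 then a2 else a3"]) (simp_all add: Nil)
      next
        assume "mdeg a = 2" "mdeg b = 1" "mdeg c = 1"
        then obtain a1 a2 a3 a4 where "a = M (X a1) (X a2)" "b = X a3" "c = X a4" using deg1 deg2 by metis
        then show ?thesis by (intro key[OF chkB_16, of "\<lambda>i. if i = 0 then a1 else if i = 1 then a2 else if i = 2 then a3 else a4"]) (simp_all add: Nil)
      next
        assume "mdeg a = 1" "mdeg b = 2" "mdeg c = 1"
        then obtain a1 a2 a3 a4 where "a = X a1" "b = M (X a2) (X a3)" "c = X a4" using deg1 deg2 by metis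
        then show ?thesis by (intro key[OF chkB_17, of "\<lambda>i. if i = 0 then a1 else if i = 1 then a2 else if i = 2 then a3 else a4"]) (simp_all add: Nil)
      next
        assume "mdeg a = 1" "mdeg b = 1" "mdeg c = 2"
        then obtain a1 a2 a3 a4 where "a = X a1" "b = X a2" "c = M (X a3) (X a4)" using deg1 deg2 by metis
        then show ?thesis by (intro key[OF chkB_18, of "\<lambda>i. if i = 0 then a1 else if i = 1 then a2 else if i = 2 then a3 else a4"]) (simp_all add: Nil)
      qed
    next
      case (Cons x rest)
      obtain bo m0 where x: "x = (bo, m0)" by fastforce
      have "rest = []"
      proof (rule ccontr)
        assume "rest \<noteq> []"
        then obtain y rest' where "rest = y # rest'" by (cases rest) auto
        then have "ctxdeg C \<ge> 2" using Cons mdeg_pos[of m0] mdeg_pos[of "snd y"] x by (simp add: ctxdeg_def)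
        then show False using False pa pb pc by simp
      qed
      then have "mdeg m0 = 1" "mdeg a = 1" "mdeg b = 1" "mdeg c = 1"
        using False pa pb pc mdeg_pos[of m0] Cons x by (auto simp: ctxdeg_def)
      then obtain a1 a2 a3 a4 where abc: "a = X a1" "b = X a2" "c = X a3" "m0 = X a4" using deg1 by metis
      show ?thesis
      proof (cases bo)
        case True
        show ?thesis by (intro key[OF chkB_19, of "\<lambda>i. if i = 0 then a1 else if i = 1 then a2 else if i = 2 then a3 else a4"]) (simp_all add: Cons x abc True \<open>rest = []\<close>)
      next
        case False
        show ?thesis by (intro key[OF chkB_20, of "\<lambda>i. if i = 0 then a1 else if i = 1 then a2 else if i = 2 then a3 else a4"]) (simp_all add: Cons x abc False \<open>rest = []\<close>)
      qed
    qed
  qed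
qed

declare S_l.simps [simp del]

lemma psi_ctx_tp: "psi (ctxP C (tp id xs)) = (tp id (psiL (ctx_l C xs)) :: 'k::field napoly)"
  by (simp only: tp_ctx_l[symmetric] psi_tp)

definition GG :: "'k::field napoly set" where
  "GG = {p. \<forall>C. psi (ctxP C p) \<in> LL}"

lemma ctxP_add: "ctxP C (p + q) = ctxP C p + ctxP C q"
  using linmap_ctxP[of C] unfolding linmap_def by blast

lemma ctxP_nsmult: "ctxP C (nsmult c p) = nsmult c (ctxP C p)"
  using linmap_ctxP[of C] unfolding linmap_def by blast

lemma ctxP_zero: "ctxP C 0 = 0"
  using linmap_zero[OF linmap_ctxP] by blast

lemma GG_zero: "0 \<in> GG"
  by (simp add: GG_def ctxP_zero Tideal.zero)

lemma GG_add: "p \<in> GG \<Longrightarrow> q \<in> GG \<Longrightarrow> p + q \<in> GG"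
  by (simp add: GG_def ctxP_add psi_add Tideal.add)

lemma GG_smult: "p \<in> GG \<Longrightarrow> nsmult c p \<in> GG"
  by (simp add: GG_def ctxP_nsmult psi_nsmult Tideal.smult)

lemma GG_lin:
  assumes "linmap \<Phi>" "\<And>t. \<Phi> (Poly_Mapping.single t 1) \<in> GG"
  shows "\<Phi> u \<in> GG"
proof -
  have "\<Phi> u = \<Phi> (lin_ext (\<lambda>t. Poly_Mapping.single t 1) u)" by (simp add: lin_ext_id)
  also have "\<dots> = lin_ext (\<lambda>t. \<Phi> (Poly_Mapping.single t 1)) u" by (rule linmap_lin_ext[OF assms(1)])
  also have "\<dots> \<in> GG"
    by (rule subspace_lin_ext) (simp_all add: GG_zero GG_add GG_smult assms(2))
  finally show ?thesis .
qed

lemma GG_multl: "p \<in> GG \<Longrightarrow> nmult q p \<in> GG"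
proof -
  assume p: "p \<in> GG"
  show ?thesis
  proof (rule GG_lin[of "\<lambda>q. nmult q p"])
    show "linmap (\<lambda>q. nmult q p)" by (rule linmap_nmult_left)
    fix t
    have h: "\<forall>C. psi (ctxP C p) \<in> LL" using p unfolding GG_def by blast
    show "nmult (Poly_Mapping.single t 1) p \<in> GG"
      unfolding GG_def
    proof (intro CollectI allI)
      fix C
      show "psi (ctxP C (nmult (Poly_Mapping.single t 1) p)) \<in> LL"
        using h[rule_format, of "(True, t) # C"] by simp
    qed
  qed
qed

lemma GG_multr: "p \<in> GG \<Longrightarrow> nmult p q \<in> GG"
proof -
  assume p: "p \<in> GG"
  show ?thesis
  proof (rule GG_lin[of "\<lambda>q. nmult p q"])
    show "linmap (\<lambda>q. nmult p q)" by (rule linmap_nmult_right)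
    fix t
    have h: "\<forall>C. psi (ctxP C p) \<in> LL" using p unfolding GG_def by blast
    show "nmult p (Poly_Mapping.single t 1) \<in> GG"
      unfolding GG_def
    proof (intro CollectI allI)
      fix C
      show "psi (ctxP C (nmult p (Poly_Mapping.single t 1))) \<in> LL"
        using h[rule_format, of "(False, t) # C"] by simp
    qed
  qed
qed

definition S1 :: "'k::field napoly \<Rightarrow> 'k napoly \<Rightarrow> 'k napoly \<Rightarrow> 'k napoly" where
  "S1 u v w = nmult (nmult u v) w - nmult u (nmult v w) - (nmult (nmult v u) w - nmult v (nmult u w))"

definition S2 :: "'k::field napoly \<Rightarrow> 'k napoly \<Rightarrow> 'k napoly \<Rightarrow> 'k napoly" where
  "S2 u v w = nmult u (nmult v w) + nmult v (nmult u w) + nmult u (nmult w v)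
     + nmult w (nmult u v) + nmult v (nmult w u) + nmult w (nmult v u)"

lemma subst_s1: "subst \<sigma> (nassoc x0 x1 x2 - nassoc x1 x0 x2) = S1 (\<sigma> 0) (\<sigma> 1) (\<sigma> 2)"
  by (simp add: nassoc_def S1_def poly_eval_lin nvar_mult3l nvar_mult3r lin_ext_diff)

lemma subst_s2: "subst \<sigma> (nmult x0 (nmult x1 x2) + nmult x1 (nmult x0 x2) + nmult x0 (nmult x2 x1)
     + nmult x2 (nmult x0 x1) + nmult x1 (nmult x2 x0) + nmult x2 (nmult x1 x0)) = S2 (\<sigma> 0) (\<sigma> 1) (\<sigma> 2)"
  by (simp add: S2_def poly_eval_lin nvar_mult3r lin_ext_add)

lemma lin_S1_1: "linmap (\<lambda>u. S1 u v w)"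
  by (simp add: linmap_def S1_def nmult_simps nsmult_add_right nsmult_diff_right algebra_simps)
lemma lin_S1_2: "linmap (\<lambda>v. S1 u v w)"
  by (simp add: linmap_def S1_def nmult_simps nsmult_add_right nsmult_diff_right algebra_simps)
lemma lin_S1_3: "linmap (\<lambda>w. S1 u v w)"
  by (simp add: linmap_def S1_def nmult_simps nsmult_add_right nsmult_diff_right algebra_simps)
lemma lin_S2_1: "linmap (\<lambda>u. S2 u v w)"
  by (simp add: linmap_def S2_def nmult_simps nsmult_add_right algebra_simps)
lemma lin_S2_2: "linmap (\<lambda>v. S2 u v w)"
  by (simp add: linmap_def S2_def nmult_simps nsmult_add_right algebra_simps)
lemma lin_S2_3: "linmap (\<lambda>w. S2 u v w)"
  by (simp add: linmap_def S2_def nmult_simps nsmult_add_right algebra_simps)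

lemma S1_singles: "S1 (Poly_Mapping.single a 1) (Poly_Mapping.single b 1) (Poly_Mapping.single c 1)
   = (tp id (S_l 1 a b c) :: 'k::field napoly)"
  by (simp add: S1_def S_l.simps single_uminus algebra_simps)

lemma S2_singles: "S2 (Poly_Mapping.single a 1) (Poly_Mapping.single b 1) (Poly_Mapping.single c 1)
   = (tp id (S_l 2 a b c) :: 'k::field napoly)"
  by (simp add: S2_def S_l.simps algebra_simps)

lemma tp_S_in_GG: "(tp id (S_l j a b c) :: 'k::field napoly) \<in> GG" if "j = 1 \<or> j = 2"
  using that
proof
  assume j: "j = 1"
  show ?thesis unfolding GG_def mem_Collect_eq j psi_ctx_tp
    by (intro allI core1)
next
  assume j: "j = 2"
  show ?thesis unfolding GG_def mem_Collect_eq j psi_ctx_tp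
    by (intro allI core2)
qed

lemma S1_in_GG: "S1 u v w \<in> GG"
proof (rule GG_lin[OF lin_S1_1])
  fix t1
  show "S1 (Poly_Mapping.single t1 1) v w \<in> GG"
  proof (rule GG_lin[OF lin_S1_2])
    fix t2
    show "S1 (Poly_Mapping.single t1 1) (Poly_Mapping.single t2 1) w \<in> GG"
    proof (rule GG_lin[OF lin_S1_3])
      fix t3
      show "S1 (Poly_Mapping.single t1 1) (Poly_Mapping.single t2 1) (Poly_Mapping.single t3 1) \<in> GG"
        unfolding S1_singles by (rule tp_S_in_GG) simp
    qed
  qed
qed

lemma S2_in_GG: "S2 u v w \<in> GG"
proof (rule GG_lin[OF lin_S2_1])
  fix t1
  show "S2 (Poly_Mapping.single t1 1) v w \<in> GG"
  proof (rule GG_lin[OF lin_S2_2])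
    fix t2
    show "S2 (Poly_Mapping.single t1 1) (Poly_Mapping.single t2 1) w \<in> GG"
    proof (rule GG_lin[OF lin_S2_3])
      fix t3
      show "S2 (Poly_Mapping.single t1 1) (Poly_Mapping.single t2 1) (Poly_Mapping.single t3 1) \<in> GG"
        unfolding S2_singles by (rule tp_S_in_GG) simp
    qed
  qed
qed

lemma T_in_GG: "p \<in> Tideal LS_A2_ids \<Longrightarrow> p \<in> GG"
proof (induction rule: Tideal.induct)
  case (gen s \<sigma>)
  then have "s = nassoc x0 x1 x2 - nassoc x1 x0 x2 \<or> s = nmult x0 (nmult x1 x2) + nmult x1 (nmult x0 x2) + nmult x0 (nmult x2 x1)
     + nmult x2 (nmult x0 x1) + nmult x1 (nmult x2 x0) + nmult x2 (nmult x1 x0)"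
    unfolding LS_A2_ids_def by blast
  then show ?case
  proof
    assume s: "s = nassoc x0 x1 x2 - nassoc x1 x0 x2"
    show ?case unfolding s subst_s1 by (rule S1_in_GG)
  next
    assume s: "s = nmult x0 (nmult x1 x2) + nmult x1 (nmult x0 x2) + nmult x0 (nmult x2 x1)
     + nmult x2 (nmult x0 x1) + nmult x1 (nmult x2 x0) + nmult x2 (nmult x1 x0)"
    show ?case unfolding s subst_s2 by (rule S2_in_GG)
  qed
next
  case zero
  then show ?case by (rule GG_zero)
next
  case (add p q)
  then show ?case by (intro GG_add) blast+
next
  case (smult p c)
  then show ?case by (intro GG_smult) blast+
next
  case (multl p q)
  then show ?case by (intro GG_multl) blast+
next
  case (multr p q)
  then show ?case by (intro GG_multr) blast+
qed

theorem mainTheorem10: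
  fixes f :: "'k::field_char_0 napoly"
  assumes "\<forall>t\<in>Poly_Mapping.keys f. mdeg t \<le> 4"
    and "is_comm_identity_of_free_LSA2 f"
  shows "f \<in> Tideal Lie_ids"
proof -
  let ?P = "poly_eval ncomm nvar f"
  have "?P \<in> Tideal LS_A2_ids" using assms(2) unfolding is_comm_identity_of_free_LSA2_def by blast
  then have "?P \<in> GG" by (rule T_in_GG)
  then have "\<forall>C. psi (ctxP C ?P) \<in> LL" unfolding GG_def by blast
  then have "psi (ctxP [] ?P) \<in> LL" by blast
  then have hP: "psi ?P \<in> LL" by simp
  have e1: "psi ?P = lin_ext (\<lambda>t. psi (mon_eval ncomm nvar t)) f"
    by (simp add: poly_eval_lin linmap_lin_ext[OF linmap_psi])
  have e2: "nsmult 12 f = lin_ext (\<lambda>t. nsmult 12 (Poly_Mapping.single t 1)) f"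
    by (simp only: lin_ext_fun_nsmult lin_ext_id)
  have "nsmult 12 f - psi ?P = lin_ext (\<lambda>t. nsmult 12 (Poly_Mapping.single t 1) - psi (mon_eval ncomm nvar t)) f"
    by (simp only: e1 e2 lin_ext_fun_diff)
  also have "\<dots> \<in> LL"
  proof (rule subspace_lin_ext)
    show "0 \<in> LL" by (rule Tideal.zero)
    show "\<And>p q. p \<in> LL \<Longrightarrow> q \<in> LL \<Longrightarrow> p + q \<in> LL" by (rule Tideal.add)
    show "\<And>c p. p \<in> LL \<Longrightarrow> nsmult c p \<in> LL" by (rule Tideal.smult)
    fix t assume "t \<in> Poly_Mapping.keys f"
    then have "mdeg t \<le> 4" using assms(1) by blast
    then show "nsmult 12 (Poly_Mapping.single t 1) - psi (mon_eval ncomm nvar t) \<in> LL"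
      by (rule stepC)
  qed
  finally have "nsmult 12 f - psi ?P \<in> LL" .
  then have "(nsmult 12 f - psi ?P) + psi ?P \<in> LL" using hP by (rule Tideal.add)
  then have "nsmult 12 f \<in> LL" by simp
  then have "nsmult (1 / 12) (nsmult 12 f) \<in> LL" by (rule Tideal.smult)
  then show ?thesis by simp
qed

end
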